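(* Assume [H1]. Fix $x\in\mathcal G$ and $(y,\alpha)\in\Gamma[x]$, and let $(x_n)_n\subset\mathcal G$ with $\delta_n:=d(x_n,x)\to 0$. Then for all $n$ large enough (so that $\delta_n<T$) there exists $(y_n,\alpha_n)\in\Gamma[x_n]$ such that (i) $\sup_{s\in[0,T]} d(y_n(s),y(s))\le \delta_n+\|\alpha\|_2\sqrt{\delta_n}$ and $y_n(T)=y(T)$; (ii) $\|\alpha_n\|_2^2\le\|\alpha\|_2^2+\delta_n\big(1+\frac{\|\alpha\|_2^2}{T-\delta_n}\big)$; (iii) $\lim_{n\to\infty}J_0(x_n;(y_n,\alpha_n))=J_0(x;(y,\alpha))$.
   Context: Let $N\ge 2$, $d\ge 1$, and let $e_1,\dots,e_N\in\mathbb R^d$ be pairwise distinct unit vectors. Let $J_i=\{s e_i: s\ge 0\}$, $\mathcal G=\bigcup_{i=1}^N J_i$ and $O=0$. $\mathcal G$ carries the geodesic distance $d(x,y)=|x-y|$ if $x,y$ lie in a common $J_i$ and $d(x,y)=|x|+|y|$ otherwise. Fix $T>0$. For $i=0,\dots,N$ let $A_i=\{i\}\times\mathbb R$, $A=\bigcup_{i=0}^N A_i$ (disjoint union); for $a=(i,\bar a)$ write $|a|=|\bar a|$. Let $M=\{(x,a): x\in\mathcal G,\ a\in A_i \text{ if } x\in J_i\setminus\{O\},\ a\in A \text{ if } x=O\}$ and $f:M\to\mathbb R^d$, $f(x,(i,\bar a))=\bar a e_i$ for $i\ge 1$, $f(O,(0,\bar a))=0$. For $0\le t_1<t_2\le T$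 and $x\in\mathcal G$, $\Gamma_{t_1,t_2}[x]$ is the set of pairs $(y,\alpha)$ with $y\in W^{1,2}([t_1,t_2];\mathcal G)$, $\alpha:[t_1,t_2]\to A$ measurable, $(y(s),\alpha(s))\in M$ for a.e. $s$, $\int_{t_1}^{t_2}|\alpha|^2<\infty$, and $y(s)=x+\int_{t_1}^s f(y(\tau),\alpha(\tau))\,d\tau$ for all $s$. Write $\Gamma_t[x]=\Gamma_{t,T}[x]$, $\Gamma[x]=\Gamma_{0,T}[x]$, and $\|\alpha\|_2=(\int|\alpha|^2)^{1/2}$. [H1]: for $i=1,\dots,N$, $\ell_i:J_i\times[0,T]\to\mathbb R$ and $g_i:J_i\to\mathbb R$ are continuous and bounded; $\ell_*:[0,T]\to\mathbb R$ is continuous and bounded; $g_*\in\mathbb R$. Set $\ell_O(t)=\min\{\ell_*(t),\min_i\ell_i(O,t)\}$; $L(x,t)=\ell_i(x,t)$ if $x\in J_i\setminus\{O\}$, $L(O,t)=\ell_O(t)$; $g(x)=g_i(x)$ if $x\in J_i\setminus\{O\}$, $g(O)=\min\{g_*,\min_i g_i(O)\}$. For $(y,\alpha)\in\Gamma_t[x]$, $J_t(x;(y,\alpha))=\int_t^T\big(L(y(\tau),\tau)+\tfrac12|\alpha(\tau)|^2\big)d\tau+g(y(T))$. *)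

theory Defs
  imports "HOL-Analysis.Analysis"
begin

text \<open>Star-shaped network in R^d (d = DIM('a)). Edges are indexed by i in {1..N},
  with direction e i. Controls a = (i, abar) :: nat \<times> real; index 0 is the vertex control set.\<close>

definition ray :: "'a::euclidean_space \<Rightarrow> 'a set" where
  "ray v = {s *\<^sub>R v | s. s \<ge> 0}"

definition netw :: "(nat \<Rightarrow> 'a::euclidean_space) \<Rightarrow> nat \<Rightarrow> 'a set" where
  "netw e N = (\<Union>i\<in>{1..N}. ray (e i))"

definition gdist :: "(nat \<Rightarrow> 'a::euclidean_space) \<Rightarrow> nat \<Rightarrow> 'a \<Rightarrow> 'a \<Rightarrow> real" where
  "gdist e N x y =
     (if \<exists>i\<in>{1..N}. x \<in> ray (e i) \<and> y \<in> ray (e i) then norm (x - y) else norm x + norm y)"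

definition inM :: "(nat \<Rightarrow> 'a::euclidean_space) \<Rightarrow> nat \<Rightarrow> 'a \<Rightarrow> nat \<times> real \<Rightarrow> bool" where
  "inM e N x a \<longleftrightarrow> x \<in> netw e N \<and> fst a \<le> N \<and>
     (\<forall>i\<in>{1..N}. x \<in> ray (e i) - {0} \<longrightarrow> fst a = i)"

definition dyn :: "(nat \<Rightarrow> 'a::euclidean_space) \<Rightarrow> 'a \<Rightarrow> nat \<times> real \<Rightarrow> 'a" where
  "dyn e x a = (if fst a = 0 then 0 else snd a *\<^sub>R e (fst a))"

text \<open>admissible trajectories Gamma_{t1,t2}[x]. The W^{1,2} regularity of y is encoded
  by the integral equation with an integrable (indeed L^2) integrand.\<close>
definition Gamma :: "(nat \<Rightarrow> 'a::euclidean_space) \<Rightarrow> nat \<Rightarrow> real \<Rightarrow> real \<Rightarrow> 'a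
     \<Rightarrow> ((real \<Rightarrow> 'a) \<times> (real \<Rightarrow> nat \<times> real)) set" where
  "Gamma e N t1 t2 x = {(y, \<alpha>).
     (\<forall>s\<in>{t1..t2}. y s \<in> netw e N) \<and>
     (\<lambda>s. fst (\<alpha> s)) \<in> measurable (restrict_space lebesgue {t1..t2}) (count_space UNIV) \<and>
     (\<lambda>s. snd (\<alpha> s)) \<in> borel_measurable (restrict_space lebesgue {t1..t2}) \<and>
     (AE s in lebesgue. s \<in> {t1..t2} \<longrightarrow> inM e N (y s) (\<alpha> s)) \<and>
     set_integrable lebesgue {t1..t2} (\<lambda>s. (snd (\<alpha> s))\<^sup>2) \<and>
     (\<forall>s\<in>{t1..t2}. set_integrable lebesgue {t1..s} (\<lambda>\<tau>. dyn e (y \<tau>) (\<alpha> \<tau>)) \<and>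
        y s = x + (LINT \<tau>:{t1..s}|lebesgue. dyn e (y \<tau>) (\<alpha> \<tau>)))}"

definition L2norm :: "(real \<Rightarrow> nat \<times> real) \<Rightarrow> real \<Rightarrow> real \<Rightarrow> real" where
  "L2norm \<alpha> t1 t2 = sqrt (LINT s:{t1..t2}|lebesgue. (snd (\<alpha> s))\<^sup>2)"

definition edge_index :: "(nat \<Rightarrow> 'a::euclidean_space) \<Rightarrow> nat \<Rightarrow> 'a \<Rightarrow> nat" where
  "edge_index e N x = (THE i. (i \<in> {1..N} \<and> x \<in> ray (e i)))"

definition Lcost :: "(nat \<Rightarrow> 'a::euclidean_space) \<Rightarrow> nat \<Rightarrow> (nat \<Rightarrow> 'a \<Rightarrow> real \<Rightarrow> real)
     \<Rightarrow> (real \<Rightarrow> real) \<Rightarrow> 'a \<Rightarrow> real \<Rightarrow> real" where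
  "Lcost e N l lstar x t =
     (if x = 0 then min (lstar t) (Min ((\<lambda>i. l i 0 t) ` {1..N}))
      else l (edge_index e N x) x t)"

definition gcost :: "(nat \<Rightarrow> 'a::euclidean_space) \<Rightarrow> nat \<Rightarrow> (nat \<Rightarrow> 'a \<Rightarrow> real)
     \<Rightarrow> real \<Rightarrow> 'a \<Rightarrow> real" where
  "gcost e N g gstar x =
     (if x = 0 then min gstar (Min ((\<lambda>i. g i 0) ` {1..N}))
      else g (edge_index e N x) x)"

definition Jcost :: "(nat \<Rightarrow> 'a::euclidean_space) \<Rightarrow> nat \<Rightarrow> (nat \<Rightarrow> 'a \<Rightarrow> real \<Rightarrow> real)
     \<Rightarrow> (real \<Rightarrow> real) \<Rightarrow> (nat \<Rightarrow> 'a \<Rightarrow> real) \<Rightarrow> real \<Rightarrow> real \<Rightarrow> real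
     \<Rightarrow> (real \<Rightarrow> 'a) \<times> (real \<Rightarrow> nat \<times> real) \<Rightarrow> real" where
  "Jcost e N l lstar g gstar T t p =
     (LINT \<tau>:{t..T}|lebesgue. Lcost e N l lstar (fst p \<tau>) \<tau> + 1/2 * (snd (snd p \<tau>))\<^sup>2)
     + gcost e N g gstar (fst p T)"

end

theory Submission
  imports Defs
begin



locale netloc =
  fixes e :: "nat \<Rightarrow> 'a::euclidean_space" and N :: nat
  assumes e_unit: "\<forall>i\<in>{1..N}. norm (e i) = 1" and e_inj: "inj_on e {1..N}"
begin

lemma ray_char: "norm v = 1 \<Longrightarrow> ray v = {z. z = (z \<bullet> v) *\<^sub>R v \<and> 0 \<le> z \<bullet> v}"
  unfolding ray_def by (auto simp: dot_square_norm power2_eq_square)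

lemma ray_closed: "norm v = 1 \<Longrightarrow> closed (ray v)"
  apply (subst ray_char, assumption)
  apply (intro closed_Collect_conj closed_Collect_eq closed_Collect_le)
  apply (auto intro!: continuous_intros)
  done

lemma ray_norm: "norm v = 1 \<Longrightarrow> z \<in> ray v \<Longrightarrow> z = norm z *\<^sub>R v"
  unfolding ray_def by auto

lemma ray_0[simp]: "0 \<in> ray v" unfolding ray_def by auto

lemma ray_scale: "r \<ge> 0 \<Longrightarrow> r *\<^sub>R v \<in> ray v" unfolding ray_def by auto

lemma ray_inter:
  assumes "i \<in> {1..N}" "k \<in> {1..N}" "i \<noteq> k" "z \<in> ray (e i)" "z \<in> ray (e k)"
  shows "z = 0"
proof (rule ccontr)
  assume nz: "z \<noteq> 0"
  have u: "norm (e i) = 1" "norm (e k) = 1" using assms e_unit by auto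
  have "z = norm z *\<^sub>R e i" "z = norm z *\<^sub>R e k" using ray_norm u assms by auto
  hence "e i = e k" using nz by (metis scaleR_cancel_left norm_eq_zero)
  with e_inj assms show False by (auto dest: inj_onD)
qed

lemma netw_0: "N \<ge> 1 \<Longrightarrow> 0 \<in> netw e N" unfolding netw_def by auto

lemma edge_index_eq:
  assumes "k \<in> {1..N}" "z \<in> ray (e k)" "z \<noteq> 0"
  shows "edge_index e N z = k"
  unfolding edge_index_def
  apply (rule the_equality)
  using assms ray_inter by auto

lemma gdist_ge_norm: "norm (x - y) \<le> gdist e N x y"
  unfolding gdist_def by (auto intro: norm_triangle_ineq4)

lemma gdist_sym: "gdist e N x y = gdist e N y x"
  unfolding gdist_def by (auto simp: norm_minus_commute)

lemma gdist_triangle: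
  assumes "u \<in> netw e N" "v \<in> netw e N" "w \<in> netw e N"
  shows "gdist e N u w \<le> gdist e N u v + gdist e N v w"
proof (cases "\<exists>i\<in>{1..N}. u \<in> ray (e i) \<and> w \<in> ray (e i)")
  case True
  hence "gdist e N u w = norm (u - w)" unfolding gdist_def by auto
  also have "\<dots> \<le> norm (u - v) + norm (v - w)" using norm_triangle_ineq[of "u - v" "v - w"] by simp
  also have "\<dots> \<le> gdist e N u v + gdist e N v w" using gdist_ge_norm by (intro add_mono)
  finally show ?thesis .
next
  case False
  hence eq: "gdist e N u w = norm u + norm w" unfolding gdist_def by auto
  obtain i where i: "i \<in> {1..N}" "u \<in> ray (e i)" using assms unfolding netw_def by auto
  obtain k where k: "k \<in> {1..N}" "w \<in> ray (e k)" using assms unfolding netw_def by auto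
  show ?thesis
  proof (cases "\<exists>j\<in>{1..N}. u \<in> ray (e j) \<and> v \<in> ray (e j)")
    case uv: True
    show ?thesis
    proof (cases "\<exists>j\<in>{1..N}. v \<in> ray (e j) \<and> w \<in> ray (e j)")
      case vw: True
      from uv vw obtain j1 j2 where j: "j1 \<in> {1..N}" "u \<in> ray (e j1)" "v \<in> ray (e j1)"
        "j2 \<in> {1..N}" "v \<in> ray (e j2)" "w \<in> ray (e j2)" by auto
      have "j1 \<noteq> j2" using False j by auto
      hence "v = 0" using ray_inter j by blast
      hence "gdist e N u v = norm u" "gdist e N v w = norm w" unfolding gdist_def using j by auto
      thus ?thesis using eq by simp
    next
      case vw: False
      hence "gdist e N v w = norm v + norm w" unfolding gdist_def by auto
      moreover have "gdist e N u v \<ge> norm u - norm v" using gdist_ge_norm[of u v]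
        by (smt (verit) norm_triangle_ineq2)
      ultimately show ?thesis using eq by simp
    qed
  next
    case uv: False
    hence "gdist e N u v = norm u + norm v" unfolding gdist_def by auto
    moreover have "gdist e N v w \<ge> norm w - norm v" using gdist_ge_norm[of v w]
      by (smt (verit) norm_triangle_ineq3 norm_minus_commute)
    ultimately show ?thesis using eq by simp
  qed
qed

lemma dyn_norm: "fst a \<le> N \<Longrightarrow> norm (dyn e z a) \<le> \<bar>snd a\<bar>"
  using e_unit unfolding dyn_def by (cases "fst a = 0") auto
lemma dyn_scale: "dyn e z (fst a, c * snd a) = c *\<^sub>R dyn e w a"
  unfolding dyn_def by auto

lemma GammaD:
  assumes "(y, \<alpha>) \<in> Gamma e N t1 t2 x"
  shows "\<forall>s\<in>{t1..t2}. y s \<in> netw e N"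
    "(\<lambda>s. fst (\<alpha> s)) \<in> measurable (restrict_space lebesgue {t1..t2}) (count_space UNIV)"
    "(\<lambda>s. snd (\<alpha> s)) \<in> borel_measurable (restrict_space lebesgue {t1..t2})"
    "AE s in lebesgue. s \<in> {t1..t2} \<longrightarrow> inM e N (y s) (\<alpha> s)"
    "set_integrable lebesgue {t1..t2} (\<lambda>s. (snd (\<alpha> s))\<^sup>2)"
    "\<And>s. s\<in>{t1..t2} \<Longrightarrow> set_integrable lebesgue {t1..s} (\<lambda>\<tau>. dyn e (y \<tau>) (\<alpha> \<tau>))"
    "\<And>s. s\<in>{t1..t2} \<Longrightarrow> y s = x + (LINT \<tau>:{t1..s}|lebesgue. dyn e (y \<tau>) (\<alpha> \<tau>))"
  using assms unfolding Gamma_def by auto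

lemma Gamma_snd_meas:
  assumes "(y, \<alpha>) \<in> Gamma e N t1 t2 x"
  shows "set_borel_measurable lebesgue {t1..t2} (\<lambda>s. snd (\<alpha> s))"
  using GammaD(3)[OF assms] unfolding set_borel_measurable_def
  by (subst (asm) borel_measurable_restrict_space_iff) auto

lemma abs_le_1_sq: "\<bar>a::real\<bar> \<le> 1 + a\<^sup>2"
proof -
  have "0 \<le> (\<bar>a\<bar> - 1)\<^sup>2" by simp
  hence "2 * \<bar>a\<bar> \<le> \<bar>a\<bar>\<^sup>2 + 1" by (simp add: power2_eq_square algebra_simps)
  thus ?thesis by simp
qed

lemma Gamma_abs_int:
  assumes "(y, \<alpha>) \<in> Gamma e N t1 t2 x" "t1 \<le> u" "w \<le> t2"
  shows "set_integrable lebesgue {u..w} (\<lambda>s. \<bar>snd (\<alpha> s)\<bar>)"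
proof -
  have "set_integrable lebesgue {t1..t2} (\<lambda>s. 1 + (snd (\<alpha> s))\<^sup>2)"
    using GammaD(5)[OF assms(1)] by (intro set_integral_add) auto
  moreover have "set_borel_measurable lebesgue {t1..t2} (\<lambda>s. \<bar>snd (\<alpha> s)\<bar>)"
  proof -
    have "(\<lambda>s. \<bar>indicator {t1..t2} s *\<^sub>R snd (\<alpha> s)\<bar>) \<in> borel_measurable lebesgue"
      using Gamma_snd_meas[OF assms(1)] unfolding set_borel_measurable_def by (rule borel_measurable_abs)
    thus ?thesis unfolding set_borel_measurable_def by (simp add: abs_mult)
  qed
  ultimately have "set_integrable lebesgue {t1..t2} (\<lambda>s. \<bar>snd (\<alpha> s)\<bar>)"
    by (rule set_integrable_bound) (auto intro!: AE_I2 simp: abs_le_1_sq)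
  thus ?thesis by (rule set_integrable_subset) (use assms in auto)
qed

lemma Gamma_cont:
  assumes "(y, \<alpha>) \<in> Gamma e N t1 t2 x" "t1 \<le> t2"
  shows "continuous_on {t1..t2} y"
proof -
  let ?f = "\<lambda>\<tau>. dyn e (y \<tau>) (\<alpha> \<tau>)"
  have "?f integrable_on {t1..t2}"
    using GammaD(6)[OF assms(1), of t2] assms(2) set_lebesgue_integral_eq_integral(1) by auto
  hence "continuous_on {t1..t2} (\<lambda>s. x + integral {t1..s} ?f)"
    by (intro continuous_intros indefinite_integral_continuous_1)
  moreover have "x + integral {t1..s} ?f = y s" if s: "s \<in> {t1..t2}" for s
    using GammaD(7)[OF assms(1) s] set_lebesgue_integral_eq_integral(2)[OF GammaD(6)[OF assms(1) s]] by simp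
  ultimately show ?thesis using continuous_on_eq by blast
qed

lemma Gamma_diff:
  assumes "(y, \<alpha>) \<in> Gamma e N t1 t2 x" "t1 \<le> u" "u \<le> w" "w \<le> t2"
  shows "norm (y w - y u) \<le> (LINT s:{u..w}|lebesgue. \<bar>snd (\<alpha> s)\<bar>)"
proof -
  let ?f = "\<lambda>\<tau>. dyn e (y \<tau>) (\<alpha> \<tau>)"
  have iw: "set_integrable lebesgue {t1..w} ?f" using GammaD(6)[OF assms(1), of w] assms by auto
  have iuw: "set_integrable lebesgue {u..w} ?f" by (rule set_integrable_subset[OF iw]) (use assms in auto)
  have "integral {t1..u} ?f + integral {u..w} ?f = integral {t1..w} ?f"
    by (rule Henstock_Kurzweil_Integration.integral_combine[OF assms(2,3) set_lebesgue_integral_eq_integral(1)[OF iw]])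
  moreover have "y s = x + integral {t1..s} ?f" if s: "s \<in> {t1..t2}" for s
    using GammaD(7)[OF assms(1) s] set_lebesgue_integral_eq_integral(2)[OF GammaD(6)[OF assms(1) s]] by simp
  moreover have "u \<in> {t1..t2}" "w \<in> {t1..t2}" using assms by auto
  ultimately have "y w - y u = integral {u..w} ?f" by (simp add: algebra_simps)
  also have "\<dots> = (LINT s:{u..w}|lebesgue. ?f s)" using set_lebesgue_integral_eq_integral(2)[OF iuw] by simp
  finally have "norm (y w - y u) = norm (LINT s:{u..w}|lebesgue. ?f s)" by simp
  also have "\<dots> \<le> (LINT s:{u..w}|lebesgue. norm (?f s))"
    by (rule set_integral_norm_bound) (rule iuw)
  also have "\<dots> \<le> (LINT s:{u..w}|lebesgue. \<bar>snd (\<alpha> s)\<bar>)"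
  proof (rule set_integral_mono_AE)
    show "set_integrable lebesgue {u..w} (\<lambda>s. norm (?f s))" using iuw by (rule set_integrable_norm)
    show "set_integrable lebesgue {u..w} (\<lambda>s. \<bar>snd (\<alpha> s)\<bar>)" using Gamma_abs_int assms by auto
    show "AE s\<in>{u..w} in lebesgue. norm (?f s) \<le> \<bar>snd (\<alpha> s)\<bar>"
      using GammaD(4)[OF assms(1)] apply eventually_elim
      using assms by (auto simp: inM_def intro!: dyn_norm)
  qed
  finally show ?thesis .
qed


lemma Gamma_abs_split:
  assumes "(y, \<alpha>) \<in> Gamma e N t1 t2 x" "t1 \<le> u" "u \<le> c" "c \<le> w" "w \<le> t2"
  shows "(LINT s:{u..c}|lebesgue. \<bar>snd (\<alpha> s)\<bar>) + (LINT s:{c..w}|lebesgue. \<bar>snd (\<alpha> s)\<bar>)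
       = (LINT s:{u..w}|lebesgue. \<bar>snd (\<alpha> s)\<bar>)"
proof -
  have i: "set_integrable lebesgue {a..b} (\<lambda>s. \<bar>snd (\<alpha> s)\<bar>)" if "t1 \<le> a" "b \<le> t2" for a b
    using Gamma_abs_int[OF assms(1) that] .
  have "integral {u..c} (\<lambda>s. \<bar>snd (\<alpha> s)\<bar>) + integral {c..w} (\<lambda>s. \<bar>snd (\<alpha> s)\<bar>)
      = integral {u..w} (\<lambda>s. \<bar>snd (\<alpha> s)\<bar>)"
    by (rule Henstock_Kurzweil_Integration.integral_combine[OF assms(3,4) set_lebesgue_integral_eq_integral(1)[OF i]]) (use assms in auto)
  thus ?thesis using set_lebesgue_integral_eq_integral(2)[OF i] assms by simp
qed

lemma Gamma_zero_cross:
  assumes G: "(y, \<alpha>) \<in> Gamma e N t1 t2 x" "t1 \<le> u" "u \<le> w" "w \<le> t2"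
    and nr: "\<not> (\<exists>i\<in>{1..N}. y u \<in> ray (e i) \<and> y w \<in> ray (e i))"
  shows "\<exists>c\<in>{u..w}. y c = 0"
proof (rule ccontr)
  assume nz: "\<not> (\<exists>c\<in>{u..w}. y c = 0)"
  have net: "y s \<in> netw e N" if "s \<in> {u..w}" for s using GammaD(1)[OF G(1)] that G by auto
  obtain i where i: "i \<in> {1..N}" "y u \<in> ray (e i)" using net[of u] G unfolding netw_def by auto
  obtain k where k: "k \<in> {1..N}" "y w \<in> ray (e k)" using net[of w] G unfolding netw_def by auto
  have ki: "k \<noteq> i" using nr i k by auto
  let ?S = "y ` {u..w}"
  have "continuous_on {u..w} y" using Gamma_cont[OF G(1)] G continuous_on_subset by fastforce
  hence conn: "connected ?S" by (intro connected_continuous_image) auto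
  let ?A = "ray (e i)" and ?B = "\<Union>j\<in>{1..N}-{i}. ray (e j)"
  have "closed ?A" using ray_closed[OF bspec[OF e_unit i(1)]] .
  moreover have "closed ?B" using ray_closed e_unit by (intro closed_UN) auto
  moreover have "?S \<subseteq> ?A \<union> ?B" using net unfolding netw_def by blast
  moreover have "?A \<inter> ?B \<inter> ?S = {}"
  proof -
    have "z = 0" if "z \<in> ?A" "z \<in> ?B" for z using that ray_inter i by blast
    thus ?thesis using nz by auto
  qed
  moreover have "?A \<inter> ?S \<noteq> {}" using i G by auto
  moreover have "?B \<inter> ?S \<noteq> {}"
  proof -
    have "y w \<in> ?B" using k ki by blast
    moreover have "y w \<in> ?S" using G by auto
    ultimately show ?thesis by blast
  qed
  ultimately show False using conn unfolding connected_closed by blast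
qed

lemma Gamma_gdist:
  assumes G: "(y, \<alpha>) \<in> Gamma e N t1 t2 x" "t1 \<le> u" "u \<le> w" "w \<le> t2"
  shows "gdist e N (y u) (y w) \<le> (LINT s:{u..w}|lebesgue. \<bar>snd (\<alpha> s)\<bar>)"
proof (cases "\<exists>i\<in>{1..N}. y u \<in> ray (e i) \<and> y w \<in> ray (e i)")
  case True
  hence "gdist e N (y u) (y w) = norm (y w - y u)" unfolding gdist_def by (auto simp: norm_minus_commute)
  thus ?thesis using Gamma_diff[OF G] by simp
next
  case False
  hence eq: "gdist e N (y u) (y w) = norm (y u) + norm (y w)" unfolding gdist_def by auto
  obtain c where c: "c \<in> {u..w}" "y c = 0" using Gamma_zero_cross[OF G False] by auto
  have "norm (y u) \<le> (LINT s:{u..c}|lebesgue. \<bar>snd (\<alpha> s)\<bar>)"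
    using Gamma_diff[OF G(1) G(2), of c] c G by (simp add: norm_minus_commute)
  moreover have "norm (y w) \<le> (LINT s:{c..w}|lebesgue. \<bar>snd (\<alpha> s)\<bar>)"
    using Gamma_diff[OF G(1) _ _ G(4), of c] c G by simp
  ultimately show ?thesis using eq Gamma_abs_split[OF G(1,2), of c w] c G by simp
qed

lemma amgm_bound:
  fixes A I L :: real
  assumes H: "\<And>\<epsilon>. \<epsilon> > 0 \<Longrightarrow> A \<le> I / (2 * \<epsilon>) + \<epsilon> * L / 2" and I: "I \<ge> 0" and L: "L \<ge> 0"
  shows "A \<le> sqrt (I * L)"
proof (cases "I > 0 \<and> L > 0")
  case True
  define \<epsilon> where "\<epsilon> = sqrt I / sqrt L"
  have ep: "\<epsilon> > 0" using True unfolding \<epsilon>_def by auto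
  have "I / (2 * \<epsilon>) = sqrt I * sqrt L / 2" using True unfolding \<epsilon>_def
    by (simp add: field_simps)
  moreover have "\<epsilon> * L / 2 = sqrt I * sqrt L / 2" using True unfolding \<epsilon>_def
    by (simp add: field_simps)
  ultimately show ?thesis using H[OF ep] by (simp add: real_sqrt_mult)
next
  case False
  hence z: "I * L = 0" using I L by auto
  show ?thesis
  proof (rule ccontr)
    assume "\<not> A \<le> sqrt (I * L)"
    hence A: "A > 0" using z by simp
    show False
    proof (cases "I = 0")
      case True
      have "A \<le> A / (L + 1) * L / 2" using H[of "A / (L + 1)"] A L True by simp
      moreover have "A / (L + 1) * L / 2 \<le> A / 2" using A L by (simp add: field_simps)
      ultimately show False using A by linarith
    next
      case False
      hence L0: "L = 0" using z by simp
      have "A \<le> I / (2 * (I / A))" using H[of "I / A"] A I False L0 by simp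
      also have "\<dots> = A / 2" using False A by (simp add: field_simps)
      finally show False using A by simp
    qed
  qed
qed

lemma Gamma_abs_sqrt:
  assumes G: "(y, \<alpha>) \<in> Gamma e N t1 t2 x" "t1 \<le> u" "u \<le> w" "w \<le> t2"
  shows "(LINT s:{u..w}|lebesgue. \<bar>snd (\<alpha> s)\<bar>) \<le> sqrt ((w - u) * (LINT s:{t1..t2}|lebesgue. (snd (\<alpha> s))\<^sup>2))"
proof -
  let ?I = "LINT s:{t1..t2}|lebesgue. (snd (\<alpha> s))\<^sup>2"
  let ?J = "LINT s:{u..w}|lebesgue. (snd (\<alpha> s))\<^sup>2"
  have i2: "set_integrable lebesgue {t1..t2} (\<lambda>s. (snd (\<alpha> s))\<^sup>2)" using GammaD(5)[OF G(1)] .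
  have j2: "set_integrable lebesgue {u..w} (\<lambda>s. (snd (\<alpha> s))\<^sup>2)"
    by (rule set_integrable_subset[OF i2]) (use G in auto)
  have ia: "set_integrable lebesgue {u..w} (\<lambda>s. \<bar>snd (\<alpha> s)\<bar>)" using Gamma_abs_int G by auto
  have JI: "?J \<le> ?I"
  proof -
    have "integral {u..w} (\<lambda>s. (snd (\<alpha> s))\<^sup>2) \<le> integral {t1..t2} (\<lambda>s. (snd (\<alpha> s))\<^sup>2)"
      by (rule integral_subset_le) (use G set_lebesgue_integral_eq_integral(1)[OF i2] set_lebesgue_integral_eq_integral(1)[OF j2] in auto)
    thus ?thesis using set_lebesgue_integral_eq_integral(2)[OF i2] set_lebesgue_integral_eq_integral(2)[OF j2] by simp
  qed
  have J0: "?J \<ge> 0" unfolding set_lebesgue_integral_def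
    by (rule Bochner_Integration.integral_nonneg) (auto simp: indicator_def)
  have "(LINT s:{u..w}|lebesgue. \<bar>snd (\<alpha> s)\<bar>) \<le> sqrt (?J * (w - u))"
  proof (rule amgm_bound)
    fix \<epsilon> :: real assume ep: "\<epsilon> > 0"
    have "(LINT s:{u..w}|lebesgue. \<bar>snd (\<alpha> s)\<bar>)
        \<le> (LINT s:{u..w}|lebesgue. (snd (\<alpha> s))\<^sup>2 / (2 * \<epsilon>) + \<epsilon> / 2)"
    proof (rule set_integral_mono)
      show "set_integrable lebesgue {u..w} (\<lambda>s. (snd (\<alpha> s))\<^sup>2 / (2 * \<epsilon>) + \<epsilon> / 2)"
        using j2 by (intro set_integral_add) auto
      fix s
      have "0 \<le> (\<bar>snd (\<alpha> s)\<bar> - \<epsilon>)\<^sup>2" by simp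
      hence "2 * \<epsilon> * \<bar>snd (\<alpha> s)\<bar> \<le> (snd (\<alpha> s))\<^sup>2 + \<epsilon>\<^sup>2"
        by (simp add: power2_eq_square algebra_simps)
      thus "\<bar>snd (\<alpha> s)\<bar> \<le> (snd (\<alpha> s))\<^sup>2 / (2 * \<epsilon>) + \<epsilon> / 2"
        using ep by (simp add: field_simps power2_eq_square)
    qed (rule ia)
    also have "\<dots> = ?J / (2 * \<epsilon>) + \<epsilon> * (w - u) / 2"
      using j2 G by (subst set_integral_add(2)) (auto simp: set_integral_const)
    finally show "(LINT s:{u..w}|lebesgue. \<bar>snd (\<alpha> s)\<bar>) \<le> ?J / (2 * \<epsilon>) + \<epsilon> * (w - u) / 2" .
  qed (use J0 G in auto)
  also have "\<dots> \<le> sqrt ((w - u) * ?I)" using JI G J0 by (simp add: mult.commute mult_left_mono)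
  finally show ?thesis .
qed

end



lemma affine_meas: "c \<noteq> 0 \<Longrightarrow> (\<lambda>x::real. t + c * x) \<in> lebesgue \<rightarrow>\<^sub>M lebesgue"
  using lebesgue_affine_measurable[where c= "\<lambda>x::real. c" and t = t] by (simp add: algebra_simps)

lemma AE_lebesgue_affine:
  fixes c t :: real assumes c: "c \<noteq> 0" and ae: "AE x in lebesgue. P x"
  shows "AE x in lebesgue. P (t + c * x)"
proof -
  obtain Z where Z0: "{x \<in> space lebesgue. \<not> P x} \<subseteq> Z" "emeasure lebesgue Z = 0" "Z \<in> sets lebesgue"
    using ae by (rule AE_E)
  hence Z: "{x \<in> space lebesgue. \<not> P x} \<subseteq> Z" "Z \<in> null_sets lebesgue" by auto
  have m: "(\<lambda>x. t + c*x) \<in> lebesgue \<rightarrow>\<^sub>M lebesgue" using affine_meas[OF c] .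
  have Zs: "Z \<in> sets lebesgue" using Z by auto
  have pre: "(\<lambda>x. t + c*x) -` Z \<in> sets lebesgue" using measurable_sets[OF m Zs] by simp
  have "0 = emeasure lebesgue Z" using Z by auto
  also have "\<dots> = (\<integral>\<^sup>+x. indicator Z x \<partial>lebesgue)" using Zs by simp
  also have "\<dots> = ennreal \<bar>c\<bar> * (\<integral>\<^sup>+x. indicator Z (t + c * x) \<partial>lebesgue)"
    by (rule nn_integral_real_affine_lebesgue) (use Zs c in auto)
  also have "(\<integral>\<^sup>+x. indicator Z (t + c * x) \<partial>lebesgue) = emeasure lebesgue ((\<lambda>x. t + c*x) -` Z)"
  proof -
    have "(\<lambda>x. indicator Z (t + c * x) :: ennreal) = indicator ((\<lambda>x. t + c*x) -` Z)"
      by (auto simp: indicator_def)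
    thus ?thesis using nn_integral_indicator[OF pre] by simp
  qed
  finally have h: "0 = ennreal \<bar>c\<bar> * emeasure lebesgue ((\<lambda>x. t + c*x) -` Z)" .
  have "emeasure lebesgue ((\<lambda>x. t + c*x) -` Z) = 0" using h c
    by (simp add: ennreal_eq_0_iff)
  hence "(\<lambda>x. t + c*x) -` Z \<in> null_sets lebesgue" using pre by auto
  thus ?thesis by (rule AE_I') (use Z in auto)
qed

lemma ind_affine:
  fixes c :: real assumes "c > 0"
  shows "indicator {d..d + V/c} s = (indicator {0..V} (c * (s - d)) :: real)"
proof -
  have "(d \<le> s \<and> s \<le> d + V/c) \<longleftrightarrow> (0 \<le> c * (s - d) \<and> c * (s - d) \<le> V)"
    using assms by (auto simp: field_simps)
  thus ?thesis by (auto simp: indicator_def)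
qed

lemma set_integral_affine:
  fixes F :: "real \<Rightarrow> 'b::euclidean_space" and c :: real assumes c: "c > 0"
  shows "set_integrable lebesgue {d..d+V/c} (\<lambda>s. F (c*(s-d))) \<longleftrightarrow> set_integrable lebesgue {0..V} F"
    and "(LINT s:{d..d+V/c}|lebesgue. F (c*(s-d))) = (1/c) *\<^sub>R (LINT \<tau>:{0..V}|lebesgue. F \<tau>)"
proof -
  let ?f = "\<lambda>\<tau>. indicator {0..V} \<tau> *\<^sub>R F \<tau>"
  have eq: "(\<lambda>s. indicator {d..d+V/c} s *\<^sub>R F (c*(s-d))) = (\<lambda>x. ?f ((- c * d) + c * x))"
    using ind_affine[OF c] by (auto simp: algebra_simps)
  show "set_integrable lebesgue {d..d+V/c} (\<lambda>s. F (c*(s-d))) \<longleftrightarrow> set_integrable lebesgue {0..V} F"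
    unfolding set_integrable_def eq using lebesgue_integrable_real_affine_iff[of c ?f "- c * d"] c by simp
  have "(\<integral>x. ?f x \<partial>lebesgue) = \<bar>c\<bar> *\<^sub>R (\<integral>x. ?f ((- c * d) + c * x) \<partial>lebesgue)"
    using c by (intro lebesgue_integral_real_affine) simp
  thus "(LINT s:{d..d+V/c}|lebesgue. F (c*(s-d))) = (1/c) *\<^sub>R (LINT \<tau>:{0..V}|lebesgue. F \<tau>)"
    unfolding set_lebesgue_integral_def eq using c by simp
qed

lemma restr_meas_iff: "S \<in> sets lebesgue \<Longrightarrow> c \<in> space M' \<Longrightarrow>
   f \<in> restrict_space lebesgue S \<rightarrow>\<^sub>M M' \<longleftrightarrow> (\<lambda>x. if x \<in> S then f x else c) \<in> lebesgue \<rightarrow>\<^sub>M M'"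
  by (rule measurable_restrict_space_iff) auto

lemma si_meas: "set_integrable M A f \<Longrightarrow> set_borel_measurable M A f"
  unfolding set_integrable_def set_borel_measurable_def by (rule borel_measurable_integrable)

lemma LINT_open_left:
  fixes f :: "real \<Rightarrow> 'b::euclidean_space"
  assumes "set_integrable lebesgue {a..b} f"
  shows "(LINT x:{a<..b}|lebesgue. f x) = (LINT x:{a..b}|lebesgue. f x)"
proof -
  have i2: "set_integrable lebesgue {a<..b} f" by (rule set_integrable_subset[OF assms]) auto
  have "AE x in lebesgue. x \<noteq> a" by (rule AE_I'[of "{a}"]) auto
  hence "AE x in lebesgue. x \<in> {a..b} \<longleftrightarrow> x \<in> {a<..b}" by eventually_elim auto
  thus ?thesis by (rule set_integral_cong_set[OF si_meas[OF assms] si_meas[OF i2]])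
qed

context netloc begin

lemma GammaI:
  assumes "\<And>s. s\<in>{t1..t2} \<Longrightarrow> y s \<in> netw e N"
    "(\<lambda>s. fst (\<alpha> s)) \<in> measurable (restrict_space lebesgue {t1..t2}) (count_space UNIV)"
    "(\<lambda>s. snd (\<alpha> s)) \<in> borel_measurable (restrict_space lebesgue {t1..t2})"
    "AE s in lebesgue. s \<in> {t1..t2} \<longrightarrow> inM e N (y s) (\<alpha> s)"
    "set_integrable lebesgue {t1..t2} (\<lambda>s. (snd (\<alpha> s))\<^sup>2)"
    "\<And>s. s\<in>{t1..t2} \<Longrightarrow> set_integrable lebesgue {t1..s} (\<lambda>\<tau>. dyn e (y \<tau>) (\<alpha> \<tau>))"
    "\<And>s. s\<in>{t1..t2} \<Longrightarrow> y s = x + (LINT \<tau>:{t1..s}|lebesgue. dyn e (y \<tau>) (\<alpha> \<tau>))"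
  shows "(y, \<alpha>) \<in> Gamma e N t1 t2 x"
  using assms unfolding Gamma_def by auto

lemma Gamma_seg:
  assumes k: "k \<in> {1..N}" and r0: "r0 \<ge> 0" and t: "t0 \<le> t1" and r1: "r0 + v * (t1 - t0) \<ge> 0"
  shows "(\<lambda>s. (r0 + v * (s - t0)) *\<^sub>R e k, \<lambda>s. (k, v)) \<in> Gamma e N t0 t1 (r0 *\<^sub>R e k)"
proof -
  have pos: "r0 + v * (s - t0) \<ge> 0" if "s \<in> {t0..t1}" for s
  proof (cases "v \<ge> 0")
    case True thus ?thesis using that r0 by auto
  next
    case False
    hence "v * (s - t0) \<ge> v * (t1 - t0)" using that by (intro mult_left_mono_neg) auto
    thus ?thesis using r1 by linarith
  qed
  have inray: "(r0 + v * (s - t0)) *\<^sub>R e k \<in> ray (e k)" if "s \<in> {t0..t1}" for s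
    using pos[OF that] by (rule ray_scale)
  have innet: "(r0 + v * (s - t0)) *\<^sub>R e k \<in> netw e N" if "s \<in> {t0..t1}" for s
    using inray[OF that] k unfolding netw_def by auto
  have inm: "inM e N ((r0 + v * (s - t0)) *\<^sub>R e k) (k, v)" if "s \<in> {t0..t1}" for s
  proof -
    have "k = i" if "i \<in> {1..N}" "(r0 + v * (s - t0)) *\<^sub>R e k \<in> ray (e i) - {0}" for i
    proof (rule ccontr)
      assume "k \<noteq> i" thus False using ray_inter[OF that(1) k, of "(r0 + v * (s - t0)) *\<^sub>R e k"] that inray[OF \<open>s \<in> {t0..t1}\<close>] by auto
    qed
    thus ?thesis unfolding inM_def using innet[OF that] k by auto
  qed
  have dy: "dyn e z (k, v) = v *\<^sub>R e k" for z using k unfolding dyn_def by auto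
  have ci: "set_integrable lebesgue {t0..s} (\<lambda>\<tau>. dyn e (Y \<tau>) (k, v))" for s Y
    unfolding dy by (rule absolutely_integrable_on_const) auto
  have li: "(LINT \<tau>:{t0..s}|lebesgue. dyn e (Y \<tau>) (k, v)) = (s - t0) *\<^sub>R v *\<^sub>R e k" if "t0 \<le> s" for s Y
    unfolding dy using that by (subst set_integral_const) auto
  show ?thesis
  proof (rule GammaI)
    show "AE s in lebesgue. s \<in> {t0..t1} \<longrightarrow> inM e N ((r0 + v * (s - t0)) *\<^sub>R e k) (k, v)"
      using inm by (intro AE_I2) auto
    show "set_integrable lebesgue {t0..t1} (\<lambda>s. (snd (k,v))\<^sup>2)" by (simp add: absolutely_integrable_on_const)
    fix s assume s: "s \<in> {t0..t1}"
    show "(r0 + v * (s - t0)) *\<^sub>R e k = r0 *\<^sub>R e k + (LINT \<tau>:{t0..s}|lebesgue. dyn e ((r0 + v * (\<tau> - t0)) *\<^sub>R e k) ((\<lambda>s. (k, v)) \<tau>))"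
      using li[of s] s by (simp add: algebra_simps)
  qed (use innet ci in auto)
qed

lemma Gamma_concat:
  assumes G1: "(y1, \<alpha>1) \<in> Gamma e N t0 t1 x" and G2: "(y2, \<alpha>2) \<in> Gamma e N t1 t2 (y1 t1)"
    and t: "t0 \<le> t1" "t1 \<le> t2"
  shows "(\<lambda>s. if s \<le> t1 then y1 s else y2 s, \<lambda>s. if s \<le> t1 then \<alpha>1 s else \<alpha>2 s) \<in> Gamma e N t0 t2 x"
proof (rule GammaI)
  let ?y = "\<lambda>s. if s \<le> t1 then y1 s else y2 s" and ?\<alpha> = "\<lambda>s. if s \<le> t1 then \<alpha>1 s else \<alpha>2 s"
  show "?y s \<in> netw e N" if "s \<in> {t0..t2}" for s using GammaD(1)[OF G1] GammaD(1)[OF G2] that by auto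
  have m1: "(\<lambda>s. if s \<in> {t0..t1} then fst (\<alpha>1 s) else 0) \<in> lebesgue \<rightarrow>\<^sub>M count_space UNIV"
    using GammaD(2)[OF G1] restr_meas_iff[of "{t0..t1}" 0 "count_space UNIV" "\<lambda>s. fst (\<alpha>1 s)"] by simp
  have m2: "(\<lambda>s. if s \<in> {t1..t2} then fst (\<alpha>2 s) else 0) \<in> lebesgue \<rightarrow>\<^sub>M count_space UNIV"
    using GammaD(2)[OF G2] restr_meas_iff[of "{t1..t2}" 0 "count_space UNIV" "\<lambda>s. fst (\<alpha>2 s)"] by simp
  have "(\<lambda>s. if s \<in> {t0..t1} then (if s \<in> {t0..t1} then fst (\<alpha>1 s) else 0)
           else (if s \<in> {t1..t2} then fst (\<alpha>2 s) else 0)) \<in> lebesgue \<rightarrow>\<^sub>M count_space UNIV"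
    by (rule measurable_If_set[OF m1 m2]) auto
  moreover have "(\<lambda>s. if s \<in> {t0..t1} then (if s \<in> {t0..t1} then fst (\<alpha>1 s) else 0)
           else (if s \<in> {t1..t2} then fst (\<alpha>2 s) else 0)) = (\<lambda>s. if s \<in> {t0..t2} then fst (?\<alpha> s) else 0)"
    using t by (auto simp: fun_eq_iff)
  ultimately show "(\<lambda>s. fst (?\<alpha> s)) \<in> restrict_space lebesgue {t0..t2} \<rightarrow>\<^sub>M count_space UNIV"
    using restr_meas_iff[of "{t0..t2}" 0 "count_space UNIV" "\<lambda>s. fst (?\<alpha> s)"] by simp
  have b1: "(\<lambda>s. if s \<in> {t0..t1} then snd (\<alpha>1 s) else 0) \<in> borel_measurable lebesgue"
    using GammaD(3)[OF G1] restr_meas_iff[of "{t0..t1}" 0 borel "\<lambda>s. snd (\<alpha>1 s)"] by simp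
  have b2: "(\<lambda>s. if s \<in> {t1..t2} then snd (\<alpha>2 s) else 0) \<in> borel_measurable lebesgue"
    using GammaD(3)[OF G2] restr_meas_iff[of "{t1..t2}" 0 borel "\<lambda>s. snd (\<alpha>2 s)"] by simp
  have "(\<lambda>s. if s \<in> {t0..t1} then (if s \<in> {t0..t1} then snd (\<alpha>1 s) else 0)
           else (if s \<in> {t1..t2} then snd (\<alpha>2 s) else 0)) \<in> borel_measurable lebesgue"
    by (rule measurable_If_set[OF b1 b2]) auto
  moreover have "(\<lambda>s. if s \<in> {t0..t1} then (if s \<in> {t0..t1} then snd (\<alpha>1 s) else 0)
           else (if s \<in> {t1..t2} then snd (\<alpha>2 s) else 0)) = (\<lambda>s. if s \<in> {t0..t2} then snd (?\<alpha> s) else 0)"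
    using t by (auto simp: fun_eq_iff)
  ultimately show "(\<lambda>s. snd (?\<alpha> s)) \<in> borel_measurable (restrict_space lebesgue {t0..t2})"
    using restr_meas_iff[of "{t0..t2}" 0 borel "\<lambda>s. snd (?\<alpha> s)"] by simp
  show "AE s in lebesgue. s \<in> {t0..t2} \<longrightarrow> inM e N (?y s) (?\<alpha> s)"
    using GammaD(4)[OF G1] GammaD(4)[OF G2] by eventually_elim auto
  have un: "{t0..t2} = {t0..t1} \<union> {t1<..t2}" using t by auto
  have "set_integrable lebesgue {t0..t1} (\<lambda>s. (snd (?\<alpha> s))\<^sup>2)"
    using GammaD(5)[OF G1] by (rule set_integrable_cong[THEN iffD1, rotated 3]) auto
  moreover have "set_integrable lebesgue {t1<..t2} (\<lambda>s. (snd (?\<alpha> s))\<^sup>2)"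
    using set_integrable_subset[OF GammaD(5)[OF G2], of "{t1<..t2}"]
    by (rule set_integrable_cong[THEN iffD1, rotated 3]) auto
  ultimately show "set_integrable lebesgue {t0..t2} (\<lambda>s. (snd (?\<alpha> s))\<^sup>2)"
    unfolding un by (rule set_integrable_Un) auto
  fix s assume s: "s \<in> {t0..t2}"
  let ?F = "\<lambda>\<tau>. dyn e (?y \<tau>) (?\<alpha> \<tau>)"
  let ?F1 = "\<lambda>\<tau>. dyn e (y1 \<tau>) (\<alpha>1 \<tau>)" and ?F2 = "\<lambda>\<tau>. dyn e (y2 \<tau>) (\<alpha>2 \<tau>)"
  have "set_integrable lebesgue {t0..s} ?F \<and> ?y s = x + (LINT \<tau>:{t0..s}|lebesgue. ?F \<tau>)"
  proof (cases "s \<le> t1")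
    case True
    hence s1: "s \<in> {t0..t1}" using s by auto
    have "set_integrable lebesgue {t0..s} ?F"
      using GammaD(6)[OF G1 s1] by (rule set_integrable_cong[THEN iffD1, rotated 3]) (use True in auto)
    moreover have "(LINT \<tau>:{t0..s}|lebesgue. ?F \<tau>) = (LINT \<tau>:{t0..s}|lebesgue. ?F1 \<tau>)"
      by (rule set_lebesgue_integral_cong) (use True in auto)
    ultimately show ?thesis using GammaD(7)[OF G1 s1] True by simp
  next
    case False
    hence s2: "s \<in> {t1..t2}" using s by auto
    have t1m: "t1 \<in> {t0..t1}" using t by auto
    have a: "set_integrable lebesgue {t0..t1} ?F"
      using GammaD(6)[OF G1 t1m] by (rule set_integrable_cong[THEN iffD1, rotated 3]) auto
    have i2: "set_integrable lebesgue {t1..s} ?F2" using GammaD(6)[OF G2 s2] .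
    have b: "set_integrable lebesgue {t1<..s} ?F"
      using set_integrable_subset[OF i2, of "{t1<..s}"]
      by (rule set_integrable_cong[THEN iffD1, rotated 3]) auto
    have un2: "{t0..s} = {t0..t1} \<union> {t1<..s}" using t False s by auto
    have "set_integrable lebesgue {t0..s} ?F" unfolding un2 using a b by (rule set_integrable_Un) auto
    moreover have "(LINT \<tau>:{t0..s}|lebesgue. ?F \<tau>) = (LINT \<tau>:{t0..t1}|lebesgue. ?F \<tau>) + (LINT \<tau>:{t1<..s}|lebesgue. ?F \<tau>)"
      unfolding un2 by (rule set_integral_Un[OF _ a b]) auto
    moreover have "(LINT \<tau>:{t0..t1}|lebesgue. ?F \<tau>) = (LINT \<tau>:{t0..t1}|lebesgue. ?F1 \<tau>)"
      by (rule set_lebesgue_integral_cong) auto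
    moreover have "(LINT \<tau>:{t1<..s}|lebesgue. ?F \<tau>) = (LINT \<tau>:{t1<..s}|lebesgue. ?F2 \<tau>)"
      by (rule set_lebesgue_integral_cong) auto
    moreover have "(LINT \<tau>:{t1<..s}|lebesgue. ?F2 \<tau>) = (LINT \<tau>:{t1..s}|lebesgue. ?F2 \<tau>)"
      by (rule LINT_open_left[OF i2])
    ultimately show ?thesis using GammaD(7)[OF G1 t1m] GammaD(7)[OF G2 s2] False by simp
  qed
  thus "set_integrable lebesgue {t0..s} ?F" "?y s = x + (LINT \<tau>:{t0..s}|lebesgue. ?F \<tau>)" by auto
qed

lemma inM_scale: "inM e N z (fst a, r) \<longleftrightarrow> inM e N z a"
  unfolding inM_def by simp

lemma Gamma_reparam:
  assumes G: "(y, \<alpha>) \<in> Gamma e N 0 U x" and c: "c > 0"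
  shows "(\<lambda>s. y (c*(s-d)), \<lambda>s. (fst (\<alpha> (c*(s-d))), c * snd (\<alpha> (c*(s-d))))) \<in> Gamma e N d (d + U/c) x"
proof (rule GammaI)
  let ?\<alpha> = "\<lambda>s. (fst (\<alpha> (c*(s-d))), c * snd (\<alpha> (c*(s-d))))"
  have mem: "s \<in> {d..d + V/c} \<longleftrightarrow> c*(s-d) \<in> {0..V}" for s V using c by (auto simp: field_simps)
  have aff: "c * (s - d) = (- c * d) + c * s" for s by (simp add: algebra_simps)
  show "y (c*(s-d)) \<in> netw e N" if "s \<in> {d..d + U/c}" for s using GammaD(1)[OF G] mem[of s U] that by auto
  have am: "(\<lambda>s. (- c * d) + c * s) \<in> lebesgue \<rightarrow>\<^sub>M lebesgue" using affine_meas[of c "- c * d"] c by (simp del: mult_minus_left)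
  have m0: "(\<lambda>\<tau>. if \<tau> \<in> {0..U} then fst (\<alpha> \<tau>) else 0) \<in> lebesgue \<rightarrow>\<^sub>M count_space UNIV"
    using GammaD(2)[OF G] restr_meas_iff[of "{0..U}" 0 "count_space UNIV" "\<lambda>s. fst (\<alpha> s)"] by simp
  have "(\<lambda>s. if s \<in> {d..d + U/c} then fst (?\<alpha> s) else 0)
      = (\<lambda>\<tau>. if \<tau> \<in> {0..U} then fst (\<alpha> \<tau>) else 0) \<circ> (\<lambda>s. (- c * d) + c * s)"
    using mem[of _ U] aff by (auto simp: fun_eq_iff simp del: atLeastAtMost_iff)
  moreover have "\<dots> \<in> lebesgue \<rightarrow>\<^sub>M count_space UNIV" by (rule measurable_comp[OF am m0])
  ultimately show "(\<lambda>s. fst (?\<alpha> s)) \<in> restrict_space lebesgue {d..d + U/c} \<rightarrow>\<^sub>M count_space UNIV"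
    using restr_meas_iff[of "{d..d + U/c}" 0 "count_space UNIV" "\<lambda>s. fst (?\<alpha> s)"] by simp
  have b0: "(\<lambda>\<tau>. if \<tau> \<in> {0..U} then snd (\<alpha> \<tau>) else 0) \<in> borel_measurable lebesgue"
    using GammaD(3)[OF G] restr_meas_iff[of "{0..U}" 0 borel "\<lambda>s. snd (\<alpha> s)"] by simp
  have "(\<lambda>s. if s \<in> {d..d + U/c} then snd (?\<alpha> s) else 0)
      = (\<lambda>s. c * ((\<lambda>\<tau>. if \<tau> \<in> {0..U} then snd (\<alpha> \<tau>) else 0) \<circ> (\<lambda>s. (- c * d) + c * s)) s)"
    using mem[of _ U] aff by (auto simp: fun_eq_iff simp del: atLeastAtMost_iff)
  moreover have "\<dots> \<in> borel_measurable lebesgue"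
    by (intro borel_measurable_times measurable_const measurable_comp[OF am b0]) auto
  ultimately show "(\<lambda>s. snd (?\<alpha> s)) \<in> borel_measurable (restrict_space lebesgue {d..d + U/c})"
    using restr_meas_iff[of "{d..d + U/c}" 0 borel "\<lambda>s. snd (?\<alpha> s)"] by simp
  have "AE s in lebesgue. ((- c * d) + c * s) \<in> {0..U} \<longrightarrow> inM e N (y ((- c * d) + c * s)) (\<alpha> ((- c * d) + c * s))"
    using c GammaD(4)[OF G] by (intro AE_lebesgue_affine) auto
  thus "AE s in lebesgue. s \<in> {d..d + U/c} \<longrightarrow> inM e N (y (c*(s-d))) (?\<alpha> s)"
    apply eventually_elim
    using mem[of _ U] aff inM_scale by (simp del: atLeastAtMost_iff)
  have "set_integrable lebesgue {d..d + U/c} (\<lambda>s. (\<lambda>\<tau>. (snd (\<alpha> \<tau>))\<^sup>2) (c*(s-d)))"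
    using set_integral_affine(1)[OF c, of d U "\<lambda>\<tau>. (snd (\<alpha> \<tau>))\<^sup>2"] GammaD(5)[OF G] by simp
  hence "set_integrable lebesgue {d..d + U/c} (\<lambda>s. c\<^sup>2 * (snd (\<alpha> (c*(s-d))))\<^sup>2)"
    by (rule set_integrable_mult_right)
  thus "set_integrable lebesgue {d..d + U/c} (\<lambda>s. (snd (?\<alpha> s))\<^sup>2)" by (simp add: power_mult_distrib)
  fix s assume s: "s \<in> {d..d + U/c}"
  define V where "V = c * (s - d)"
  have V: "V \<in> {0..U}" using mem[of s U] s V_def by auto
  have sV: "{d..s} = {d..d + V/c}" using c V_def by auto
  let ?F = "\<lambda>\<tau>. dyn e (y \<tau>) (\<alpha> \<tau>)"
  have eqF: "dyn e (y (c*(\<tau>-d))) (?\<alpha> \<tau>) = c *\<^sub>R ?F (c*(\<tau>-d))" for \<tau>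
    by (rule dyn_scale)
  have iF: "set_integrable lebesgue {d..s} (\<lambda>\<tau>. ?F (c*(\<tau>-d)))"
    unfolding sV using set_integral_affine(1)[OF c, of d V ?F] GammaD(6)[OF G V] by simp
  show "set_integrable lebesgue {d..s} (\<lambda>\<tau>. dyn e (y (c*(\<tau>-d))) (?\<alpha> \<tau>))"
    unfolding eqF using iF by (rule set_integrable_scaleR_right)
  have "(LINT \<tau>:{d..s}|lebesgue. dyn e (y (c*(\<tau>-d))) (?\<alpha> \<tau>)) = c *\<^sub>R (LINT \<tau>:{d..s}|lebesgue. ?F (c*(\<tau>-d)))"
    unfolding eqF by simp
  also have "\<dots> = (LINT \<tau>:{0..V}|lebesgue. ?F \<tau>)"
    unfolding sV using set_integral_affine(2)[OF c, of d V ?F] c by simp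
  finally show "y (c*(s-d)) = x + (LINT \<tau>:{d..s}|lebesgue. dyn e (y (c*(\<tau>-d))) (?\<alpha> \<tau>))"
    using GammaD(7)[OF G V] V_def by simp
qed

end



lemma borel_to_lebesgue: "f \<in> borel_measurable borel \<Longrightarrow> f \<in> borel_measurable lebesgue"
  apply (rule measurable_completion) apply (subst measurable_lborel2) apply assumption done

lemma continuous_on_Min_image:
  fixes f :: "'i \<Rightarrow> 'b::topological_space \<Rightarrow> real"
  assumes "finite I" "I \<noteq> {}" "\<And>i. i \<in> I \<Longrightarrow> continuous_on S (f i)"
  shows "continuous_on S (\<lambda>t. Min ((\<lambda>i. f i t) ` I))"
  using assms
proof (induction I rule: finite_ne_induct)
  case (singleton x) thus ?case by simp
next
  case (insert x F)
  have "continuous_on S (\<lambda>t. min (f x t) (Min ((\<lambda>i. f i t) ` F)))"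
    using insert by (intro continuous_on_min) auto
  moreover have "min (f x t) (Min ((\<lambda>i. f i t) ` F)) = Min ((\<lambda>i. f i t) ` insert x F)" for t
    using insert by (simp add: Min_insert)
  ultimately show ?case by simp
qed

locale costloc = netloc e N for e :: "nat \<Rightarrow> 'a::euclidean_space" and N +
  fixes l :: "nat \<Rightarrow> 'a \<Rightarrow> real \<Rightarrow> real" and lstar :: "real \<Rightarrow> real" and T :: real
  assumes N1: "N \<ge> 1" and T_pos: "T > 0"
  and l_cont: "\<forall>i\<in>{1..N}. continuous_on (ray (e i) \<times> {0..T}) (\<lambda>(z, t). l i z t)"
  and l_bdd: "\<forall>i\<in>{1..N}. bounded ((\<lambda>(z, t). l i z t) ` (ray (e i) \<times> {0..T}))"
  and lstar_cont: "continuous_on {0..T} lstar"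
  and lstar_bdd: "bounded (lstar ` {0..T})"
begin

abbreviation "LL \<equiv> Lcost e N l lstar"

lemma netw_cases:
  assumes "z \<in> netw e N"
  shows "z = 0 \<or> (\<exists>k\<in>{1..N}. z \<in> ray (e k) \<and> z \<noteq> 0 \<and> edge_index e N z = k)"
  using assms edge_index_eq unfolding netw_def by blast

lemma L_bound: "\<exists>B. \<forall>z\<in>netw e N. \<forall>t\<in>{0..T}. \<bar>LL z t\<bar> \<le> B"
proof -
  have "\<forall>i\<in>{1..N}. \<exists>b. \<forall>z\<in>ray (e i). \<forall>t\<in>{0..T}. \<bar>l i z t\<bar> \<le> b"
  proof
    fix i assume i: "i \<in> {1..N}"
    obtain b where b: "\<forall>x \<in> (\<lambda>(z,t). l i z t) ` (ray (e i) \<times> {0..T}). norm x \<le> b"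
      using l_bdd i unfolding bounded_iff by blast
    have "\<bar>l i z t\<bar> \<le> b" if "z \<in> ray (e i)" "t \<in> {0..T}" for z t
    proof -
      have "l i z t \<in> (\<lambda>(z,t). l i z t) ` (ray (e i) \<times> {0..T})"
        using that by (intro image_eqI[of _ _ "(z,t)"]) auto
      thus ?thesis using b by auto
    qed
    thus "\<exists>b. \<forall>z\<in>ray (e i). \<forall>t\<in>{0..T}. \<bar>l i z t\<bar> \<le> b" by blast
  qed
  then obtain bf where bf0: "\<forall>i\<in>{1..N}. \<forall>z\<in>ray (e i). \<forall>t\<in>{0..T}. \<bar>l i z t\<bar> \<le> bf i"
    by (auto dest!: bchoice)
  hence bf: "\<And>i z t. i \<in> {1..N} \<Longrightarrow> z \<in> ray (e i) \<Longrightarrow> t \<in> {0..T} \<Longrightarrow> \<bar>l i z t\<bar> \<le> bf i"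
    by blast
  obtain bs where bs0: "\<forall>t\<in>{0..T}. \<bar>lstar t\<bar> \<le> bs"
    using lstar_bdd unfolding bounded_iff by auto
  hence bs: "\<And>t. t \<in> {0..T} \<Longrightarrow> \<bar>lstar t\<bar> \<le> bs" by blast
  define B where "B = \<bar>bs\<bar> + (\<Sum>i\<in>{1..N}. \<bar>bf i\<bar>)"
  have bfB: "\<bar>bf i\<bar> \<le> B" if "i \<in> {1..N}" for i
  proof -
    have "\<bar>bf i\<bar> \<le> (\<Sum>i\<in>{1..N}. \<bar>bf i\<bar>)" using that by (intro member_le_sum) auto
    thus ?thesis unfolding B_def by simp
  qed
  have "\<bar>LL z t\<bar> \<le> B" if z: "z \<in> netw e N" and t: "t \<in> {0..T}" for z t
  proof (cases "z = 0")
    case True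
    have ne: "(\<lambda>i. l i 0 t) ` {1..N} \<noteq> {}" using N1 by auto
    obtain i where i: "i \<in> {1..N}" "Min ((\<lambda>i. l i 0 t) ` {1..N}) = l i 0 t"
      using Min_in[OF _ ne] by auto
    have "\<bar>l i 0 t\<bar> \<le> B" using bf[OF i(1) ray_0 t] bfB[OF i(1)] by linarith
    moreover have "\<bar>lstar t\<bar> \<le> B"
    proof -
      have "0 \<le> (\<Sum>i\<in>{1..N}. \<bar>bf i\<bar>)" by (intro sum_nonneg) auto
      thus ?thesis using bs[OF t] unfolding B_def by linarith
    qed
    ultimately show ?thesis using True i unfolding Lcost_def by (simp add: min_def)
  next
    case False
    then obtain k where k: "k \<in> {1..N}" "z \<in> ray (e k)" "edge_index e N z = k"
      using netw_cases[OF z] by auto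
    thus ?thesis using False bf[OF k(1,2) t] bfB[OF k(1)] unfolding Lcost_def by simp
  qed
  thus ?thesis by blast
qed

lemma l_cont_t:
  assumes i: "i \<in> {1..N}" and z: "z \<in> ray (e i)" shows "continuous_on {0..T} (\<lambda>t. l i z t)"
proof -
  have "continuous_on {0..T} (\<lambda>t. (\<lambda>(z,t). l i z t) ((\<lambda>t. (z,t)) t))"
    by (rule continuous_on_compose2[OF bspec[OF l_cont i]]) (use z in \<open>auto intro: continuous_intros\<close>)
  thus ?thesis by simp
qed

lemma L0_cont: "continuous_on {0..T} (\<lambda>t. LL 0 t)"
proof -
  have "continuous_on {0..T} (\<lambda>t. min (lstar t) (Min ((\<lambda>i. l i 0 t) ` {1..N})))"
    by (intro continuous_on_min lstar_cont continuous_on_Min_image) (use N1 l_cont_t in auto)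
  thus ?thesis by (simp add: Lcost_def)
qed

lemma L_cont_t: assumes z: "z \<in> netw e N" shows "continuous_on {0..T} (\<lambda>t. LL z t)"
proof (cases "z = 0")
  case True thus ?thesis using L0_cont by simp
next
  case False
  then obtain k where k: "k \<in> {1..N}" "z \<in> ray (e k)" "edge_index e N z = k"
    using netw_cases[OF z] by auto
  have "LL z t = l k z t" for t using False k unfolding Lcost_def by simp
  thus ?thesis using l_cont_t[OF k(1,2)] by simp
qed

lemma closed_sets_lebesgue: "closed S \<Longrightarrow> S \<in> sets lebesgue"
  using sets_completionI_sets[of S lborel] borel_closed[of S] by simp

lemma L_integrable:
  fixes a b :: real and \<phi> :: "real \<Rightarrow> 'a" and \<psi> :: "real \<Rightarrow> real"
  assumes phi: "continuous_on {a..b} \<phi>" "\<forall>\<tau>\<in>{a..b}. \<phi> \<tau> \<in> netw e N"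
    and psi: "continuous_on {a..b} \<psi>" "\<forall>\<tau>\<in>{a..b}. \<psi> \<tau> \<in> {0..T}"
  shows "set_integrable lebesgue {a..b} (\<lambda>\<tau>. LL (\<phi> \<tau>) (\<psi> \<tau>))"
proof -
  define Z where "Z = {a..b} \<inter> \<phi> -` {0}"
  define A where "A i = {a..b} \<inter> \<phi> -` ray (e i)" for i
  have cZ: "closed Z" unfolding Z_def by (rule continuous_closed_preimage[OF phi(1)]) auto
  have cA: "closed (A i)" if "i \<in> {1..N}" for i
    unfolding A_def by (rule continuous_closed_preimage[OF phi(1)]) (use ray_closed[OF bspec[OF e_unit that]] in auto)
  let ?G = "\<lambda>\<tau>. if \<tau> \<in> Z then indicator {a..b} \<tau> * LL 0 (\<psi> \<tau>)
     else (\<Sum>i\<in>{1..N}. indicator (A i) \<tau> * l i (\<phi> \<tau>) (\<psi> \<tau>))"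
  have eq: "indicator {a..b} \<tau> * LL (\<phi> \<tau>) (\<psi> \<tau>) = ?G \<tau>" for \<tau>
  proof (cases "\<tau> \<in> {a..b}")
    case False thus ?thesis unfolding Z_def A_def by (auto simp: indicator_def)
  next
    case True
    show ?thesis
    proof (cases "\<tau> \<in> Z")
      case True thus ?thesis unfolding Z_def by (auto simp: indicator_def)
    next
      case nZ: False
      hence nz: "\<phi> \<tau> \<noteq> 0" using True unfolding Z_def by auto
      then obtain k where k: "k \<in> {1..N}" "\<phi> \<tau> \<in> ray (e k)" "edge_index e N (\<phi> \<tau>) = k"
        using netw_cases phi(2) True by blast
      have ind: "indicator (A i) \<tau> * l i (\<phi> \<tau>) (\<psi> \<tau>) = (if i = k then l k (\<phi> \<tau>) (\<psi> \<tau>) else 0)"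
        if "i \<in> {1..N}" for i
      proof (cases "i = k")
        case True thus ?thesis using k \<open>\<tau> \<in> {a..b}\<close> unfolding A_def by (auto simp: indicator_def)
      next
        case False
        have "\<phi> \<tau> \<notin> ray (e i)" using ray_inter[OF that k(1) False _ k(2)] nz by auto
        thus ?thesis using False unfolding A_def by (auto simp: indicator_def)
      qed
      have "(\<Sum>i\<in>{1..N}. indicator (A i) \<tau> * l i (\<phi> \<tau>) (\<psi> \<tau>))
          = (\<Sum>i\<in>{1..N}. if i = k then l k (\<phi> \<tau>) (\<psi> \<tau>) else 0)"
        using ind by (intro sum.cong) auto
      also have "\<dots> = l k (\<phi> \<tau>) (\<psi> \<tau>)" using k(1) by simp
      finally show ?thesis using nZ True nz k unfolding Lcost_def by simp
    qed
  qed
  have m1: "(\<lambda>\<tau>. indicator {a..b} \<tau> * LL 0 (\<psi> \<tau>)) \<in> borel_measurable lebesgue"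
  proof -
    have "continuous_on {a..b} (\<lambda>\<tau>. LL 0 (\<psi> \<tau>))"
      by (rule continuous_on_compose2[OF L0_cont psi(1)]) (use psi(2) in auto)
    hence "(\<lambda>\<tau>. indicator {a..b} \<tau> *\<^sub>R LL 0 (\<psi> \<tau>)) \<in> borel_measurable borel"
      by (intro borel_measurable_continuous_on_indicator) auto
    thus ?thesis by (intro borel_to_lebesgue) simp
  qed
  have m2: "(\<lambda>\<tau>. \<Sum>i\<in>{1..N}. indicator (A i) \<tau> * l i (\<phi> \<tau>) (\<psi> \<tau>)) \<in> borel_measurable lebesgue"
  proof (intro borel_measurable_sum)
    fix i assume i: "i \<in> {1..N}"
    have "continuous_on (A i) (\<lambda>\<tau>. (\<lambda>(z,t). l i z t) ((\<lambda>\<tau>. (\<phi> \<tau>, \<psi> \<tau>)) \<tau>))"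
    proof (rule continuous_on_compose2[OF bspec[OF l_cont i]])
      show "continuous_on (A i) (\<lambda>\<tau>. (\<phi> \<tau>, \<psi> \<tau>))" unfolding A_def
        by (intro continuous_on_Pair; rule continuous_on_subset[OF _ Int_lower1]) (use phi psi in auto)
      show "(\<lambda>\<tau>. (\<phi> \<tau>, \<psi> \<tau>)) ` A i \<subseteq> ray (e i) \<times> {0..T}" unfolding A_def using psi(2) by auto
    qed
    hence "(\<lambda>\<tau>. indicator (A i) \<tau> *\<^sub>R l i (\<phi> \<tau>) (\<psi> \<tau>)) \<in> borel_measurable borel"
      using cA[OF i] by (intro borel_measurable_continuous_on_indicator) auto
    thus "(\<lambda>\<tau>. indicator (A i) \<tau> * l i (\<phi> \<tau>) (\<psi> \<tau>)) \<in> borel_measurable lebesgue"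
      by (intro borel_to_lebesgue) simp
  qed
  have mG: "?G \<in> borel_measurable lebesgue"
    by (rule measurable_If_set[OF m1 m2]) (use closed_sets_lebesgue[OF cZ] in auto)
  obtain B where B: "\<And>z t. z \<in> netw e N \<Longrightarrow> t \<in> {0..T} \<Longrightarrow> \<bar>LL z t\<bar> \<le> B" using L_bound by blast
  have "integrable lebesgue (\<lambda>\<tau>. indicator {a..b} \<tau> *\<^sub>R B)"
    using absolutely_integrable_on_const[of "{a..b}" B] unfolding set_integrable_def by simp
  moreover have "(\<lambda>\<tau>. indicator {a..b} \<tau> *\<^sub>R LL (\<phi> \<tau>) (\<psi> \<tau>)) \<in> borel_measurable lebesgue"
    using mG eq by simp
  moreover have "AE \<tau> in lebesgue. norm (indicator {a..b} \<tau> *\<^sub>R LL (\<phi> \<tau>) (\<psi> \<tau>)) \<le> norm (indicator {a..b} \<tau> *\<^sub>R B)"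
  proof (rule AE_I2)
    fix \<tau> show "norm (indicator {a..b} \<tau> *\<^sub>R LL (\<phi> \<tau>) (\<psi> \<tau>)) \<le> norm (indicator {a..b} \<tau> *\<^sub>R B)"
      using B[of "\<phi> \<tau>" "\<psi> \<tau>"] phi(2) psi(2) by (auto simp: indicator_def)
  qed
  ultimately show ?thesis unfolding set_integrable_def by (rule Bochner_Integration.integrable_bound)
qed

end



context netloc begin

lemma path_exists:
  assumes z: "z \<in> netw e N" and x: "x \<in> netw e N"
  shows "\<exists>p \<beta>. (p, \<beta>) \<in> Gamma e N 0 (gdist e N z x) z \<and> p (gdist e N z x) = x \<and> (\<forall>\<tau>. \<bar>snd (\<beta> \<tau>)\<bar> \<le> 1)"
proof (cases "\<exists>k\<in>{1..N}. z \<in> ray (e k) \<and> x \<in> ray (e k)")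
  case True
  then obtain k where k: "k \<in> {1..N}" "z \<in> ray (e k)" "x \<in> ray (e k)" by auto
  define a where "a = norm z"
  define b where "b = norm x"
  have ek: "norm (e k) = 1" using e_unit k by auto
  have za: "z = a *\<^sub>R e k" and xb: "x = b *\<^sub>R e k" using ray_norm[OF ek] k unfolding a_def b_def by auto
  have "gdist e N z x = norm (z - x)" using True unfolding gdist_def by auto
  also have "\<dots> = \<bar>a - b\<bar>" unfolding za xb using ek by (simp add: scaleR_diff_left[symmetric])
  finally have d: "gdist e N z x = \<bar>a - b\<bar>" .
  define v where "v = sgn (b - a)"
  have vab: "v * \<bar>a - b\<bar> = b - a" unfolding v_def by (auto simp: sgn_if abs_if)
  have b0: "b \<ge> 0" unfolding b_def by simp
  have G: "(\<lambda>s. (a + v * (s - 0)) *\<^sub>R e k, \<lambda>s. (k, v)) \<in> Gamma e N 0 \<bar>a - b\<bar> (a *\<^sub>R e k)"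
    by (rule Gamma_seg[OF k(1)]) (use vab b0 a_def in auto)
  show ?thesis
  proof (intro exI conjI)
    show "(\<lambda>s. (a + v * (s - 0)) *\<^sub>R e k, \<lambda>s. (k, v)) \<in> Gamma e N 0 (gdist e N z x) z"
      unfolding d by (subst za) (rule G)
    show "(a + v * (gdist e N z x - 0)) *\<^sub>R e k = x" unfolding d using vab by (subst xb) simp
    show "\<forall>\<tau>. \<bar>snd (k, v)\<bar> \<le> 1" unfolding v_def by (simp add: abs_sgn_eq)
  qed
next
  case False
  obtain i where i: "i \<in> {1..N}" "z \<in> ray (e i)" using z unfolding netw_def by auto
  obtain j where j: "j \<in> {1..N}" "x \<in> ray (e j)" using x unfolding netw_def by auto
  define a where "a = norm z"
  define b where "b = norm x"
  have ei: "norm (e i) = 1" using e_unit i by auto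
  have ej: "norm (e j) = 1" using e_unit j by auto
  have za: "z = a *\<^sub>R e i" using ray_norm[OF ei] i unfolding a_def by auto
  have xb: "x = b *\<^sub>R e j" using ray_norm[OF ej] j unfolding b_def by auto
  have d: "gdist e N z x = a + b" using False unfolding gdist_def a_def b_def by auto
  have bpos: "b > 0"
  proof (rule ccontr)
    assume "\<not> b > 0" hence "x = 0" unfolding b_def by simp
    thus False using False i by auto
  qed
  have a0: "a \<ge> 0" unfolding a_def by simp
  have G1: "(\<lambda>s. (a + (-1) * (s - 0)) *\<^sub>R e i, \<lambda>s. (i, -1)) \<in> Gamma e N 0 a (a *\<^sub>R e i)"
    by (rule Gamma_seg[OF i(1)]) (use a0 in auto)
  have G2: "(\<lambda>s. (0 + 1 * (s - a)) *\<^sub>R e j, \<lambda>s. (j, 1)) \<in> Gamma e N a (a + b) (0 *\<^sub>R e j)"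
    by (rule Gamma_seg[OF j(1)]) (use bpos in auto)
  have G2': "(\<lambda>s. (0 + 1 * (s - a)) *\<^sub>R e j, \<lambda>s. (j, 1)) \<in> Gamma e N a (a + b) ((\<lambda>s. (a + (-1) * (s - 0)) *\<^sub>R e i) a)"
    using G2 by simp
  have G: "(\<lambda>s. if s \<le> a then (\<lambda>s. (a + (-1) * (s - 0)) *\<^sub>R e i) s else (\<lambda>s. (0 + 1 * (s - a)) *\<^sub>R e j) s,
            \<lambda>s. if s \<le> a then (\<lambda>s. (i, -1::real)) s else (\<lambda>s. (j, 1)) s) \<in> Gamma e N 0 (a + b) (a *\<^sub>R e i)"
    by (rule Gamma_concat[OF G1 G2']) (use a0 bpos in auto)
  show ?thesis
  proof (intro exI conjI)
    show "(\<lambda>s. if s \<le> a then (\<lambda>s. (a + (-1) * (s - 0)) *\<^sub>R e i) s else (\<lambda>s. (0 + 1 * (s - a)) *\<^sub>R e j) s,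
            \<lambda>s. if s \<le> a then (\<lambda>s. (i, -1::real)) s else (\<lambda>s. (j, 1)) s) \<in> Gamma e N 0 (gdist e N z x) z"
      unfolding d by (subst za) (rule G)
    show "(\<lambda>s. if s \<le> a then (\<lambda>s. (a + (-1) * (s - 0)) *\<^sub>R e i) s else (\<lambda>s. (0 + 1 * (s - a)) *\<^sub>R e j) s) (gdist e N z x) = x"
      unfolding d using bpos by (subst xb) simp
    show "\<forall>\<tau>. \<bar>snd ((\<lambda>s. if s \<le> a then (\<lambda>s. (i, -1::real)) s else (\<lambda>s. (j, 1)) s) \<tau>)\<bar> \<le> 1" by simp
  qed
qed

lemma Gamma_start:
  assumes G: "(y, \<alpha>) \<in> Gamma e N t1 t2 x" and t: "t1 \<le> t2"
  shows "y t1 = x"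
proof -
  have m: "t1 \<in> {t1..t2}" using t by auto
  have "y t1 = x + (LINT \<tau>:{t1..t1}|lebesgue. dyn e (y \<tau>) (\<alpha> \<tau>))" using GammaD(7)[OF G m] .
  also have "(LINT \<tau>:{t1..t1}|lebesgue. dyn e (y \<tau>) (\<alpha> \<tau>)) = integral {t1..t1} (\<lambda>\<tau>. dyn e (y \<tau>) (\<alpha> \<tau>))"
    using set_lebesgue_integral_eq_integral(2)[OF GammaD(6)[OF G m]] .
  finally show ?thesis by simp
qed

lemma gdist_nonneg: "gdist e N u w \<ge> 0"
  using gdist_ge_norm[of u w] norm_ge_zero order_trans by blast

end

context costloc begin

lemma construct:
  assumes G: "(y, \<alpha>) \<in> Gamma e N 0 T x" and x: "x \<in> netw e N" and z: "z \<in> netw e N"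
    and dT: "gdist e N z x < T"
    and B: "\<And>z t. z \<in> netw e N \<Longrightarrow> t \<in> {0..T} \<Longrightarrow> \<bar>LL z t\<bar> \<le> B"
  defines "\<delta> \<equiv> gdist e N z x" and "c \<equiv> T / (T - gdist e N z x)"
    and "I2 \<equiv> LINT s:{0..T}|lebesgue. (snd (\<alpha> s))\<^sup>2"
  shows "\<exists>yz \<alpha>z E A. (yz, \<alpha>z) \<in> Gamma e N 0 T z \<and>
     (\<forall>s\<in>{0..T}. gdist e N (yz s) (y s) \<le> \<delta> + sqrt I2 * sqrt \<delta>) \<and> yz T = y T \<and>
     (LINT s:{0..T}|lebesgue. (snd (\<alpha>z s))\<^sup>2) = E + c * I2 \<and> 0 \<le> E \<and> E \<le> \<delta> \<and>
     (LINT s:{0..T}|lebesgue. LL (yz s) s) = A + (1/c) * (LINT \<tau>:{0..T}|lebesgue. LL (y \<tau>) (\<delta> + \<tau>/c)) \<and>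
     \<bar>A\<bar> \<le> B * \<delta>"
proof -
  have d0: "\<delta> \<ge> 0" unfolding \<delta>_def by (rule gdist_nonneg)
  have dT': "\<delta> < T" using dT unfolding \<delta>_def .
  have cdef: "c = T / (T - \<delta>)" unfolding c_def \<delta>_def ..
  have c0: "c > 0" using dT' T_pos d0 unfolding cdef by auto
  have c1: "c \<ge> 1" using dT' T_pos d0 unfolding cdef by (auto simp: field_simps)
  have Tc: "\<delta> + T / c = T" using dT' T_pos unfolding cdef by (auto simp: field_simps)
  have I20: "I2 \<ge> 0" unfolding I2_def set_lebesgue_integral_def
    by (rule Bochner_Integration.integral_nonneg) (auto simp: indicator_def)
  obtain p \<beta> where P: "(p, \<beta>) \<in> Gamma e N 0 \<delta> z" and pd: "p \<delta> = x" and b1: "\<And>\<tau>. \<bar>snd (\<beta> \<tau>)\<bar> \<le> 1"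
    using path_exists[OF z x] unfolding \<delta>_def by blast
  let ?y' = "\<lambda>s. y (c*(s-\<delta>))" and ?\<alpha>' = "\<lambda>s. (fst (\<alpha> (c*(s-\<delta>))), c * snd (\<alpha> (c*(s-\<delta>))))"
  have R: "(?y', ?\<alpha>') \<in> Gamma e N \<delta> T (p \<delta>)"
    using Gamma_reparam[OF G c0, of \<delta>] unfolding Tc pd .
  define yz where "yz = (\<lambda>s. if s \<le> \<delta> then p s else ?y' s)"
  define \<alpha>z where "\<alpha>z = (\<lambda>s. if s \<le> \<delta> then \<beta> s else ?\<alpha>' s)"
  have C: "(yz, \<alpha>z) \<in> Gamma e N 0 T z"
    unfolding yz_def \<alpha>z_def by (rule Gamma_concat[OF P R]) (use d0 dT' in auto)
  have y0: "y 0 = x" using Gamma_start[OF G] T_pos by simp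
  have ynet: "y s \<in> netw e N" if "s \<in> {0..T}" for s using GammaD(1)[OF G] that by auto
  have pnet: "p s \<in> netw e N" if "s \<in> {0..\<delta>}" for s using GammaD(1)[OF P] that by auto
  have dist: "gdist e N (yz s) (y s) \<le> \<delta> + sqrt I2 * sqrt \<delta>" if s: "s \<in> {0..T}" for s
  proof (cases "s \<le> \<delta>")
    case True
    have "gdist e N (p s) (p \<delta>) \<le> (LINT t:{s..\<delta>}|lebesgue. \<bar>snd (\<beta> t)\<bar>)"
      using Gamma_gdist[OF P, of s \<delta>] s True by auto
    also have "\<dots> \<le> (LINT t:{s..\<delta>}|lebesgue. 1)"
      using Gamma_abs_int[OF P, of s \<delta>] s True b1
      by (intro set_integral_mono) (auto simp: absolutely_integrable_on_const)
    also have "\<dots> = \<delta> - s" using True by (simp add: set_integral_const)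
    finally have g1: "gdist e N (p s) (p \<delta>) \<le> \<delta>" using s by simp
    have "gdist e N (y 0) (y s) \<le> (LINT t:{0..s}|lebesgue. \<bar>snd (\<alpha> t)\<bar>)"
      using Gamma_gdist[OF G, of 0 s] s by auto
    also have "\<dots> \<le> sqrt ((s - 0) * I2)" unfolding I2_def using Gamma_abs_sqrt[OF G, of 0 s] s by auto
    also have "\<dots> \<le> sqrt (\<delta> * I2)" using True I20 by (intro real_sqrt_le_mono mult_right_mono) auto
    finally have g2: "gdist e N x (y s) \<le> sqrt I2 * sqrt \<delta>" using y0 by (simp add: real_sqrt_mult mult.commute)
    have "gdist e N (p s) (y s) \<le> gdist e N (p s) (p \<delta>) + gdist e N (p \<delta>) (y s)"
      using pnet[of s] pnet[of \<delta>] ynet[OF s] s True d0 by (intro gdist_triangle) auto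
    thus ?thesis using g1 g2 pd True unfolding yz_def by simp
  next
    case False
    define \<sigma> where "\<sigma> = c * (s - \<delta>)"
    have s1: "\<sigma> \<le> s"
    proof -
      have "\<delta> * s \<le> \<delta> * T" using s d0 by (intro mult_left_mono) auto
      hence "T * (s - \<delta>) \<le> s * (T - \<delta>)" by (simp add: algebra_simps)
      thus ?thesis unfolding \<sigma>_def cdef using dT' by (simp add: field_simps)
    qed
    have s0: "0 \<le> \<sigma>" unfolding \<sigma>_def using False c0 by simp
    have s2: "s - \<sigma> \<le> \<delta>"
    proof -
      have "(s - \<delta>) * 1 \<le> (s - \<delta>) * c" using False c1 by (intro mult_left_mono) auto
      thus ?thesis unfolding \<sigma>_def by (simp add: algebra_simps)
    qed
    have "gdist e N (y \<sigma>) (y s) \<le> (LINT t:{\<sigma>..s}|lebesgue. \<bar>snd (\<alpha> t)\<bar>)"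
      using Gamma_gdist[OF G, of \<sigma> s] s s0 s1 by auto
    also have "\<dots> \<le> sqrt ((s - \<sigma>) * I2)" unfolding I2_def using Gamma_abs_sqrt[OF G, of \<sigma> s] s s0 s1 by auto
    also have "\<dots> \<le> sqrt (\<delta> * I2)" using s2 I20 by (intro real_sqrt_le_mono mult_right_mono) auto
    also have "\<dots> \<le> \<delta> + sqrt I2 * sqrt \<delta>" using d0 by (simp add: real_sqrt_mult mult.commute)
    finally show ?thesis using False unfolding yz_def \<sigma>_def by simp
  qed
  have yT: "yz T = y T"
  proof -
    have "c * (T - \<delta>) = T" using dT' unfolding cdef by (simp add: field_simps)
    thus ?thesis using dT' unfolding yz_def by simp
  qed
  have un: "{0..T} = {0..\<delta>} \<union> {\<delta><..T}" using d0 dT' by auto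
  have iz: "set_integrable lebesgue {0..T} (\<lambda>s. (snd (\<alpha>z s))\<^sup>2)" using GammaD(5)[OF C] .
  have iz1: "set_integrable lebesgue {0..\<delta>} (\<lambda>s. (snd (\<alpha>z s))\<^sup>2)" by (rule set_integrable_subset[OF iz]) (use dT' in auto)
  have iz2: "set_integrable lebesgue {\<delta><..T} (\<lambda>s. (snd (\<alpha>z s))\<^sup>2)" by (rule set_integrable_subset[OF iz]) (use d0 in auto)
  define E where "E = (LINT s:{0..\<delta>}|lebesgue. (snd (\<alpha>z s))\<^sup>2)"
  have E0: "E \<ge> 0" unfolding E_def set_lebesgue_integral_def
    by (rule Bochner_Integration.integral_nonneg) (auto simp: indicator_def)
  have Ed: "E \<le> \<delta>"
  proof -
    have "E \<le> (LINT s:{0..\<delta>}|lebesgue. 1)" unfolding E_def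
    proof (rule set_integral_mono[OF iz1])
      show "set_integrable lebesgue {0..\<delta>} (\<lambda>s. 1::real)" by (simp add: absolutely_integrable_on_const)
      fix s assume "s \<in> {0..\<delta>}"
      hence "snd (\<alpha>z s) = snd (\<beta> s)" unfolding \<alpha>z_def by auto
      moreover have "(snd (\<beta> s))\<^sup>2 \<le> 1" using b1[of s] by (simp add: abs_square_le_1)
      ultimately show "(snd (\<alpha>z s))\<^sup>2 \<le> 1" by simp
    qed
    also have "\<dots> = \<delta>" using d0 by (simp add: set_integral_const)
    finally show ?thesis .
  qed
  have i2': "set_integrable lebesgue {\<delta>..T} (\<lambda>s. (snd (?\<alpha>' s))\<^sup>2)" using GammaD(5)[OF R] .
  have "(LINT s:{\<delta><..T}|lebesgue. (snd (\<alpha>z s))\<^sup>2) = (LINT s:{\<delta><..T}|lebesgue. (snd (?\<alpha>' s))\<^sup>2)"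
    by (rule set_lebesgue_integral_cong) (auto simp: \<alpha>z_def)
  also have "\<dots> = (LINT s:{\<delta>..T}|lebesgue. (snd (?\<alpha>' s))\<^sup>2)" by (rule LINT_open_left[OF i2'])
  also have "\<dots> = (LINT s:{\<delta>..\<delta> + T/c}|lebesgue. c\<^sup>2 * (\<lambda>\<tau>. (snd (\<alpha> \<tau>))\<^sup>2) (c*(s-\<delta>)))"
    unfolding Tc by (simp add: power_mult_distrib)
  also have "\<dots> = c\<^sup>2 * ((1/c) * I2)"
    unfolding I2_def using set_integral_affine(2)[OF c0, of \<delta> T "\<lambda>\<tau>. (snd (\<alpha> \<tau>))\<^sup>2"] by simp
  also have "\<dots> = c * I2" using c0 by (simp add: power2_eq_square)
  finally have J2: "(LINT s:{\<delta><..T}|lebesgue. (snd (\<alpha>z s))\<^sup>2) = c * I2" .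
  have L2: "(LINT s:{0..T}|lebesgue. (snd (\<alpha>z s))\<^sup>2) = E + c * I2"
    unfolding E_def J2[symmetric] un by (rule set_integral_Un[OF _ iz1 iz2]) auto
  have yzc: "continuous_on {0..T} yz" using Gamma_cont[OF C] T_pos by simp
  have yznet: "\<forall>s\<in>{0..T}. yz s \<in> netw e N" using GammaD(1)[OF C] by auto
  have Li: "set_integrable lebesgue {0..T} (\<lambda>s. LL (yz s) s)"
    by (rule L_integrable[OF yzc yznet]) (auto intro: continuous_intros)
  have Li1: "set_integrable lebesgue {0..\<delta>} (\<lambda>s. LL (yz s) s)" by (rule set_integrable_subset[OF Li]) (use dT' in auto)
  have Li2: "set_integrable lebesgue {\<delta><..T} (\<lambda>s. LL (yz s) s)" by (rule set_integrable_subset[OF Li]) (use d0 in auto)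
  define A where "A = (LINT s:{0..\<delta>}|lebesgue. LL (yz s) s)"
  have Ab: "\<bar>A\<bar> \<le> B * \<delta>"
  proof -
    have "\<bar>A\<bar> = norm (LINT s:{0..\<delta>}|lebesgue. LL (yz s) s)" unfolding A_def by simp
    also have "\<dots> \<le> (LINT s:{0..\<delta>}|lebesgue. norm (LL (yz s) s))" by (rule set_integral_norm_bound[OF Li1])
    also have "\<dots> \<le> (LINT s:{0..\<delta>}|lebesgue. B)"
    proof (rule set_integral_mono)
      show "set_integrable lebesgue {0..\<delta>} (\<lambda>s. norm (LL (yz s) s))" by (rule set_integrable_norm[OF Li1])
      show "set_integrable lebesgue {0..\<delta>} (\<lambda>s. B)" by (simp add: absolutely_integrable_on_const)
      fix s assume "s \<in> {0..\<delta>}" thus "norm (LL (yz s) s) \<le> B" using B yznet dT' by auto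
    qed
    also have "\<dots> = B * \<delta>" using d0 by (simp add: set_integral_const)
    finally show ?thesis .
  qed
  have y'c: "continuous_on {\<delta>..T} ?y'"
  proof (rule continuous_on_compose2[of "{0..T}" y])
    show "continuous_on {0..T} y" using Gamma_cont[OF G] T_pos by simp
    show "continuous_on {\<delta>..T} (\<lambda>s. c * (s - \<delta>))" by (intro continuous_intros)
    have "c * (T - \<delta>) = T" using dT' unfolding cdef by (simp add: field_simps)
    moreover have "c * (s - \<delta>) \<le> c * (T - \<delta>)" if "s \<le> T" for s using that c0 by simp
    ultimately show "(\<lambda>s. c * (s - \<delta>)) ` {\<delta>..T} \<subseteq> {0..T}" using c0 by force
  qed
  have Li3: "set_integrable lebesgue {\<delta>..T} (\<lambda>s. LL (?y' s) s)"
    by (rule L_integrable[OF y'c]) (use GammaD(1)[OF R] d0 in \<open>auto intro: continuous_intros\<close>)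
  have "(LINT s:{\<delta><..T}|lebesgue. LL (yz s) s) = (LINT s:{\<delta><..T}|lebesgue. LL (?y' s) s)"
    by (rule set_lebesgue_integral_cong) (auto simp: yz_def)
  also have "\<dots> = (LINT s:{\<delta>..T}|lebesgue. LL (?y' s) s)" by (rule LINT_open_left[OF Li3])
  also have "\<dots> = (LINT s:{\<delta>..\<delta> + T/c}|lebesgue. (\<lambda>\<tau>. LL (y \<tau>) (\<delta> + \<tau>/c)) (c*(s-\<delta>)))"
    unfolding Tc using c0 by (intro set_lebesgue_integral_cong) auto
  also have "\<dots> = (1/c) * (LINT \<tau>:{0..T}|lebesgue. LL (y \<tau>) (\<delta> + \<tau>/c))"
    using set_integral_affine(2)[OF c0, of \<delta> T "\<lambda>\<tau>. LL (y \<tau>) (\<delta> + \<tau>/c)"] by simp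
  finally have JL: "(LINT s:{\<delta><..T}|lebesgue. LL (yz s) s) = (1/c) * (LINT \<tau>:{0..T}|lebesgue. LL (y \<tau>) (\<delta> + \<tau>/c))" .
  have "(LINT s:{0..T}|lebesgue. LL (yz s) s) = A + (LINT s:{\<delta><..T}|lebesgue. LL (yz s) s)"
    unfolding A_def by (subst un) (rule set_integral_Un[OF _ Li1 Li2], auto)
  hence LL2: "(LINT s:{0..T}|lebesgue. LL (yz s) s) = A + (1/c) * (LINT \<tau>:{0..T}|lebesgue. LL (y \<tau>) (\<delta> + \<tau>/c))"
    using JL by simp
  show ?thesis using C dist yT L2 E0 Ed LL2 Ab by blast
qed

end



context costloc begin

lemma arg_range:
  assumes "0 \<le> \<delta>" "\<delta> \<le> T/2" "\<tau> \<in> {0..T}"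
  shows "\<delta> + \<tau> / (T / (T - \<delta>)) \<in> {0..T}"
proof -
  have Td: "T - \<delta> > 0" using assms T_pos by auto
  have eq: "\<tau> / (T / (T - \<delta>)) = \<tau> * (T - \<delta>) / T" using Td T_pos by (simp add: field_simps)
  have "\<tau> * (T - \<delta>) \<le> T * (T - \<delta>)" using assms Td by (intro mult_right_mono) auto
  hence "\<tau> * (T - \<delta>) / T \<le> T - \<delta>" using T_pos by (simp add: field_simps)
  moreover have "0 \<le> \<tau> * (T - \<delta>) / T" using assms Td T_pos by auto
  ultimately show ?thesis unfolding eq using assms by auto
qed

lemma K_conv:
  assumes G: "(y, \<alpha>) \<in> Gamma e N 0 T x" and dlim: "d \<longlonglongrightarrow> 0"
    and d0: "\<And>n. 0 \<le> d n" and dT: "\<And>n. d n \<le> T/2"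
  shows "(\<lambda>n. LINT \<tau>:{0..T}|lebesgue. LL (y \<tau>) (d n + \<tau> / (T / (T - d n))))
           \<longlonglongrightarrow> (LINT \<tau>:{0..T}|lebesgue. LL (y \<tau>) \<tau>)"
proof -
  obtain B where B: "\<And>z t. z \<in> netw e N \<Longrightarrow> t \<in> {0..T} \<Longrightarrow> \<bar>LL z t\<bar> \<le> B" using L_bound by blast
  have yc: "continuous_on {0..T} y" using Gamma_cont[OF G] T_pos by simp
  have yn: "\<forall>\<tau>\<in>{0..T}. y \<tau> \<in> netw e N" using GammaD(1)[OF G] .
  have i0: "set_integrable lebesgue {0..T} (\<lambda>\<tau>. LL (y \<tau>) \<tau>)"
    by (rule L_integrable[OF yc yn]) (auto intro: continuous_intros)
  have ii: "set_integrable lebesgue {0..T} (\<lambda>\<tau>. LL (y \<tau>) (d n + \<tau> / (T / (T - d n))))" for n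
    by (rule L_integrable[OF yc yn]) (use arg_range[OF d0 dT] T_pos dT[of n] in \<open>auto intro!: continuous_intros\<close>)
  show ?thesis unfolding set_lebesgue_integral_def
  proof (rule integral_dominated_convergence[where w = "\<lambda>\<tau>. indicator {0..T} \<tau> *\<^sub>R B"])
    show "(\<lambda>\<tau>. indicator {0..T} \<tau> *\<^sub>R LL (y \<tau>) \<tau>) \<in> borel_measurable lebesgue"
      using i0 unfolding set_integrable_def by (rule borel_measurable_integrable)
    show "(\<lambda>\<tau>. indicator {0..T} \<tau> *\<^sub>R LL (y \<tau>) (d n + \<tau> / (T / (T - d n)))) \<in> borel_measurable lebesgue" for n
      using ii[of n] unfolding set_integrable_def by (rule borel_measurable_integrable)
    show "integrable lebesgue (\<lambda>\<tau>. indicator {0..T} \<tau> *\<^sub>R B)"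
      using absolutely_integrable_on_const[of "{0..T}" B] unfolding set_integrable_def by simp
    show "AE \<tau> in lebesgue. (\<lambda>n. indicator {0..T} \<tau> *\<^sub>R LL (y \<tau>) (d n + \<tau> / (T / (T - d n))))
        \<longlonglongrightarrow> indicator {0..T} \<tau> *\<^sub>R LL (y \<tau>) \<tau>"
    proof (rule AE_I2)
      fix \<tau> :: real
      show "(\<lambda>n. indicator {0..T} \<tau> *\<^sub>R LL (y \<tau>) (d n + \<tau> / (T / (T - d n))))
        \<longlonglongrightarrow> indicator {0..T} \<tau> *\<^sub>R LL (y \<tau>) \<tau>"
      proof (cases "\<tau> \<in> {0..T}")
        case False thus ?thesis by simp
      next
        case True
        have arg: "(\<lambda>n. d n + \<tau> / (T / (T - d n))) \<longlonglongrightarrow> 0 + \<tau> / (T / (T - 0))"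
          using T_pos by (intro tendsto_intros dlim) auto
        hence arg': "(\<lambda>n. d n + \<tau> / (T / (T - d n))) \<longlonglongrightarrow> \<tau>" using T_pos by simp
        have "(\<lambda>n. LL (y \<tau>) (d n + \<tau> / (T / (T - d n)))) \<longlonglongrightarrow> LL (y \<tau>) \<tau>"
          by (rule continuous_on_tendsto_compose[OF L_cont_t[OF bspec[OF yn True]] arg' True])
             (use arg_range[OF d0 dT True] in auto)
        thus ?thesis by (intro tendsto_intros)
      qed
    qed
    show "AE \<tau> in lebesgue. norm (indicator {0..T} \<tau> *\<^sub>R LL (y \<tau>) (d n + \<tau> / (T / (T - d n))))
          \<le> indicator {0..T} \<tau> *\<^sub>R B" for n
    proof (rule AE_I2)
      fix \<tau> :: real
      show "norm (indicator {0..T} \<tau> *\<^sub>R LL (y \<tau>) (d n + \<tau> / (T / (T - d n)))) \<le> indicator {0..T} \<tau> *\<^sub>R B"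
        using B[OF _ arg_range[OF d0 dT], of "y \<tau>" \<tau> n] yn by (auto simp: indicator_def)
    qed
  qed
qed

end



theorem mainTheorem3:
  fixes e :: "nat \<Rightarrow> 'a::euclidean_space" and N :: nat and T :: real
    and l :: "nat \<Rightarrow> 'a \<Rightarrow> real \<Rightarrow> real" and lstar :: "real \<Rightarrow> real"
    and g :: "nat \<Rightarrow> 'a \<Rightarrow> real" and gstar :: real
    and x :: 'a and y :: "real \<Rightarrow> 'a" and \<alpha> :: "real \<Rightarrow> nat \<times> real"
    and xs :: "nat \<Rightarrow> 'a"
  assumes N2: "N \<ge> 2"
    and e_unit: "\<forall>i\<in>{1..N}. norm (e i) = 1"
    and e_inj: "inj_on e {1..N}"
    and T_pos: "T > 0"
    and l_cont: "\<forall>i\<in>{1..N}. continuous_on (ray (e i) \<times> {0..T}) (\<lambda>(z, t). l i z t)"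
    and l_bdd: "\<forall>i\<in>{1..N}. bounded ((\<lambda>(z, t). l i z t) ` (ray (e i) \<times> {0..T}))"
    and g_cont: "\<forall>i\<in>{1..N}. continuous_on (ray (e i)) (g i)"
    and g_bdd: "\<forall>i\<in>{1..N}. bounded (g i ` ray (e i))"
    and lstar_cont: "continuous_on {0..T} lstar"
    and lstar_bdd: "bounded (lstar ` {0..T})"
    and x_in: "x \<in> netw e N"
    and traj: "(y, \<alpha>) \<in> Gamma e N 0 T x"
    and xs_in: "\<forall>n. xs n \<in> netw e N"
    and conv: "(\<lambda>n. gdist e N (xs n) x) \<longlonglongrightarrow> 0"
  shows "\<exists>yn \<alpha>n.
     (\<forall>n. gdist e N (xs n) x < T \<longrightarrow>
        (yn n, \<alpha>n n) \<in> Gamma e N 0 T (xs n) \<and>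
        (\<forall>s\<in>{0..T}. gdist e N (yn n s) (y s)
            \<le> gdist e N (xs n) x + L2norm \<alpha> 0 T * sqrt (gdist e N (xs n) x)) \<and>
        yn n T = y T \<and>
        (L2norm (\<alpha>n n) 0 T)\<^sup>2 \<le> (L2norm \<alpha> 0 T)\<^sup>2
            + gdist e N (xs n) x * (1 + (L2norm \<alpha> 0 T)\<^sup>2 / (T - gdist e N (xs n) x))) \<and>
     (\<lambda>n. Jcost e N l lstar g gstar T 0 (yn n, \<alpha>n n))
        \<longlonglongrightarrow> Jcost e N l lstar g gstar T 0 (y, \<alpha>)"

proof -
  interpret C: costloc e N l lstar T
    by unfold_locales (use e_unit e_inj N2 T_pos l_cont l_bdd lstar_cont lstar_bdd in auto)
  obtain B where B: "\<And>z t. z \<in> netw e N \<Longrightarrow> t \<in> {0..T} \<Longrightarrow> \<bar>Lcost e N l lstar z t\<bar> \<le> B"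
    using C.L_bound by blast
  define d where "d n = gdist e N (xs n) x" for n
  define I2 where "I2 = (LINT s:{0..T}|lebesgue. (snd (\<alpha> s))\<^sup>2)"
  define c where "c n = T / (T - d n)" for n
  define K where "K \<delta> = (LINT \<tau>:{0..T}|lebesgue. Lcost e N l lstar (y \<tau>) (\<delta> + \<tau> / (T / (T - \<delta>))))" for \<delta>
  define P where "P n yz \<alpha>z E A \<longleftrightarrow> (yz, \<alpha>z) \<in> Gamma e N 0 T (xs n) \<and>
     (\<forall>s\<in>{0..T}. gdist e N (yz s) (y s) \<le> d n + sqrt I2 * sqrt (d n)) \<and> yz T = y T \<and>
     (LINT s:{0..T}|lebesgue. (snd (\<alpha>z s))\<^sup>2) = E + c n * I2 \<and> 0 \<le> E \<and> E \<le> d n \<and>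
     (LINT s:{0..T}|lebesgue. Lcost e N l lstar (yz s) s) = A + (1/c n) * K (d n) \<and>
     \<bar>A\<bar> \<le> B * d n" for n yz \<alpha>z E A
  have "\<forall>n. \<exists>q. d n < T \<longrightarrow> P n (fst q) (fst (snd q)) (fst (snd (snd q))) (snd (snd (snd q)))"
  proof
    fix n
    show "\<exists>q. d n < T \<longrightarrow> P n (fst q) (fst (snd q)) (fst (snd (snd q))) (snd (snd (snd q)))"
    proof (cases "d n < T")
      case True
      from C.construct[OF traj x_in xs_in[rule_format, of n] True[unfolded d_def] B]
      obtain yz \<alpha>z E A where "P n yz \<alpha>z E A" unfolding P_def d_def c_def K_def I2_def by blast
      thus ?thesis by (intro exI[of _ "(yz, \<alpha>z, E, A)"]) simp
    qed simp
  qed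
  from choice[OF this] obtain f where f: "\<And>n. d n < T \<Longrightarrow> P n (fst (f n)) (fst (snd (f n))) (fst (snd (snd (f n)))) (snd (snd (snd (f n))))"
    by blast
  define yn where "yn n = fst (f n)" for n
  define \<alpha>n where "\<alpha>n n = fst (snd (f n))" for n
  define En where "En n = fst (snd (snd (f n)))" for n
  define An where "An n = snd (snd (snd (f n)))" for n
  have Pn: "P n (yn n) (\<alpha>n n) (En n) (An n)" if "d n < T" for n
    using f[OF that] unfolding yn_def \<alpha>n_def En_def An_def .
  have I20: "I2 \<ge> 0" unfolding I2_def set_lebesgue_integral_def
    by (rule Bochner_Integration.integral_nonneg) (auto simp: indicator_def)
  have L2a: "L2norm \<alpha> 0 T = sqrt I2" unfolding L2norm_def I2_def ..
  show ?thesis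
  proof (intro exI conjI allI impI)
    fix n assume dn: "gdist e N (xs n) x < T"
    hence dn': "d n < T" unfolding d_def .
    note P = Pn[OF dn', unfolded P_def]
    have d0: "d n \<ge> 0" unfolding d_def by (rule C.gdist_nonneg)
    show "(yn n, \<alpha>n n) \<in> Gamma e N 0 T (xs n)" using P by blast
    show "\<forall>s\<in>{0..T}. gdist e N (yn n s) (y s) \<le> gdist e N (xs n) x + L2norm \<alpha> 0 T * sqrt (gdist e N (xs n) x)"
      using P unfolding L2a d_def by blast
    show "yn n T = y T" using P by blast
    have "(L2norm (\<alpha>n n) 0 T)\<^sup>2 = En n + c n * I2"
    proof -
      have "En n + c n * I2 \<ge> 0" using P I20 dn' d0 T_pos unfolding c_def by auto
      thus ?thesis unfolding L2norm_def using P by simp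
    qed
    also have "\<dots> \<le> d n + c n * I2" using P by simp
    also have "\<dots> = (L2norm \<alpha> 0 T)\<^sup>2 + d n * (1 + (L2norm \<alpha> 0 T)\<^sup>2 / (T - d n))"
      unfolding L2a c_def using I20 dn' by (simp add: field_simps)
    finally show "(L2norm (\<alpha>n n) 0 T)\<^sup>2 \<le> (L2norm \<alpha> 0 T)\<^sup>2 + gdist e N (xs n) x * (1 + (L2norm \<alpha> 0 T)\<^sup>2 / (T - gdist e N (xs n) x))"
      unfolding d_def .
  next
    have dlim: "d \<longlonglongrightarrow> 0" using conv unfolding d_def .
    have evT: "eventually (\<lambda>n. d n < T/2) sequentially" using order_tendstoD(2)[OF dlim, of "T/2"] T_pos by simp
    have d0: "d n \<ge> 0" for n unfolding d_def by (rule C.gdist_nonneg)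
    define d' where "d' n = min (d n) (T/2)" for n
    have d'lim: "d' \<longlonglongrightarrow> 0"
    proof -
      have "d' \<longlonglongrightarrow> min 0 (T/2)" unfolding d'_def by (intro tendsto_intros dlim)
      thus ?thesis using T_pos by simp
    qed
    have Kc: "(\<lambda>n. K (d' n)) \<longlonglongrightarrow> (LINT \<tau>:{0..T}|lebesgue. Lcost e N l lstar (y \<tau>) \<tau>)"
      unfolding K_def by (rule C.K_conv[OF traj d'lim]) (use d0 T_pos in \<open>auto simp: d'_def\<close>)
    have clim: "c \<longlonglongrightarrow> 1"
    proof -
      have "c \<longlonglongrightarrow> T / (T - 0)" unfolding c_def using T_pos by (intro tendsto_intros dlim) auto
      thus ?thesis using T_pos by simp
    qed
    have Alim: "An \<longlonglongrightarrow> 0"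
    proof (rule Lim_null_comparison)
      show "eventually (\<lambda>n. norm (An n) \<le> B * d n) sequentially"
        using evT by eventually_elim (use Pn T_pos in \<open>auto simp: P_def\<close>)
      show "(\<lambda>n. B * d n) \<longlonglongrightarrow> 0" using tendsto_mult[OF tendsto_const dlim, of B] by simp
    qed
    have Elim: "En \<longlonglongrightarrow> 0"
    proof (rule Lim_null_comparison)
      show "eventually (\<lambda>n. norm (En n) \<le> d n) sequentially"
        using evT by eventually_elim (use Pn T_pos in \<open>auto simp: P_def\<close>)
    qed (rule dlim)
    let ?J = "\<lambda>yy aa. (LINT \<tau>:{0..T}|lebesgue. Lcost e N l lstar (yy \<tau>) \<tau>)
                 + 1/2 * (LINT \<tau>:{0..T}|lebesgue. (snd (aa \<tau>))\<^sup>2) + gcost e N g gstar (yy T)"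
    have Jsplit: "Jcost e N l lstar g gstar T 0 (yy, aa) = ?J yy aa"
      if G: "(yy, aa) \<in> Gamma e N 0 T z" for yy aa z
    proof -
      have i1: "set_integrable lebesgue {0..T} (\<lambda>\<tau>. Lcost e N l lstar (yy \<tau>) \<tau>)"
        by (rule C.L_integrable[OF _ C.GammaD(1)[OF G]]) (use C.Gamma_cont[OF G] T_pos in \<open>auto intro: continuous_intros\<close>)
      have i2: "set_integrable lebesgue {0..T} (\<lambda>\<tau>. 1/2 * (snd (aa \<tau>))\<^sup>2)"
        using C.GammaD(5)[OF G] by (rule set_integrable_mult_right)
      show ?thesis unfolding Jcost_def using set_integral_add(2)[OF i1 i2] by simp
    qed
    define F where "F n = An n + (1 / c n) * K (d' n) + 1/2 * (En n + c n * I2) + gcost e N g gstar (y T)" for n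
    have ev: "eventually (\<lambda>n. Jcost e N l lstar g gstar T 0 (yn n, \<alpha>n n) = F n) sequentially"
      using evT
    proof eventually_elim
      case (elim n)
      hence dn: "d n < T" using T_pos by simp
      have d'n: "d' n = d n" using elim unfolding d'_def by simp
      note P = Pn[OF dn, unfolded P_def]
      have "Jcost e N l lstar g gstar T 0 (yn n, \<alpha>n n) = ?J (yn n) (\<alpha>n n)" using P Jsplit by blast
      thus ?case unfolding F_def d'n using P by simp
    qed
    have FJ: "F \<longlonglongrightarrow> 0 + (1 / 1) * (LINT \<tau>:{0..T}|lebesgue. Lcost e N l lstar (y \<tau>) \<tau>) + 1/2 * (0 + 1 * I2) + gcost e N g gstar (y T)"
      unfolding F_def by (intro tendsto_intros Alim clim Kc Elim) auto
    have "Jcost e N l lstar g gstar T 0 (y, \<alpha>) = ?J y \<alpha>" using Jsplit[OF traj] .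
    hence FJ': "F \<longlonglongrightarrow> Jcost e N l lstar g gstar T 0 (y, \<alpha>)" using FJ unfolding I2_def by simp
    show "(\<lambda>n. Jcost e N l lstar g gstar T 0 (yn n, \<alpha>n n)) \<longlonglongrightarrow> Jcost e N l lstar g gstar T 0 (y, \<alpha>)"
    proof (rule Lim_transform_eventually[OF FJ'])
      show "eventually (\<lambda>n. F n = Jcost e N l lstar g gstar T 0 (yn n, \<alpha>n n)) sequentially"
        using ev by (simp add: eq_commute)
    qed
  qed
qed


end
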